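(* Let $n\in\mathbb{N}$, $\hbar\in{]0,\infty[}$ and $\mu\in{[0,\infty[}$. Then $\mathcal{R}_{\hbar,\mu}=(\mathcal{B}_\hbar)^{++}_{\mathrm H}+\operatorname{supp}\mathcal{R}_{\hbar,\mu}$.
   Context: $\mathscr{P}^{k,\ell}(\mathbb{C}^{1+n})$ is the span of $z^K\overline{z}^L$ ($K,L\in\mathbb{N}_0^{1+n}$, $|K|=k$, $|L|=\ell$, $z^K=\prod z_i^{K_i}$, $K!=\prod K_i!$). Wick product: $f\star_\hbar g=\sum_K\frac{\hbar^{|K|}}{K!}\frac{\partial^{|K|}f}{\partial\overline{z}^K}\frac{\partial^{|K|}g}{\partial z^K}$, involution pointwise complex conjugation. $\mathcal{J}=\sum_jz_j\overline{z_j}$. $\mathcal{B}_\hbar=\bigoplus_k\mathscr{P}^{k,k}(\mathbb{C}^{1+n})$ with $\star_\hbar$; $(\mathcal{B}_\hbar)_{\mathrm H}$ its Hermitian (real-valued) elements and $(\mathcal{B}_\hbar)^{++}_{\mathrm H}$ finite sums $\sum a_j^*\star_\hbar a_j$. Fock space: $\bigoplus_k\mathscr{P}^{k,0}(\mathbb{C}^{1+n})$ with $\langle z^K,z^L\rangle_\hbar=\delta_{K,L}\hbar^{|K|}K!$, $\pi_\hbar(z^K\overline{z}^L)=z^K\hbar^{|L|}\partial^{|L|}/\partial z^L$. $(\mathcal{B}_\hbar)^+_{\mathrm H}$ = Hermitian $f$ with $\langle g,\pi_\hbar(f)g\rangle_\hbar\ge0$ for all $g$. A state on $\mathcal{B}_\hbar$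 is a linear $\omega$ with $\omega(\mathbb{1})=1$, real on Hermitian, $\ge0$ on $(\mathcal{B}_\hbar)^+_{\mathrm H}$. $\mathcal{R}_{\hbar,\mu}$ = Hermitian $f\in\mathcal{B}_\hbar$ with $\omega(f)\ge0$ for all states with $\omega((\mathcal{J}-\mu\mathbb{1})\star_\hbar(\mathcal{J}-\mu\mathbb{1}))=0$. $\operatorname{supp}Q=Q\cap(-Q)$. *)

theory Defs
  imports Complex_Main "HOL-Library.Complex_Order"
begin

text \<open>Coordinates of \<open>C^(1+n)\<close> are indexed by a finite (nonempty) type 'i with
  CARD('i) = 1 + n.  A polynomial in z and zbar
  is represented by its coefficient function: f (K, L) is the coefficient of z^K zbar^L.
  A Fock space vector (polynomial in z only) is a coefficient function K \<mapsto> g K.\<close>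

type_synonym 'i mi = "'i \<Rightarrow> nat"
type_synonym 'i pol = "'i mi \<times> 'i mi \<Rightarrow> complex"
type_synonym 'i fock = "'i mi \<Rightarrow> complex"

definition mabs :: "'i::finite mi \<Rightarrow> nat" where
  "mabs K = (\<Sum>i\<in>UNIV. K i)"

definition mfact :: "'i::finite mi \<Rightarrow> nat" where
  "mfact K = (\<Prod>i\<in>UNIV. fact (K i))"

definition padd :: "('a \<Rightarrow> complex) \<Rightarrow> ('a \<Rightarrow> complex) \<Rightarrow> 'a \<Rightarrow> complex" where
  "padd f g = (\<lambda>p. f p + g p)"
definition psmult :: "complex \<Rightarrow> ('a \<Rightarrow> complex) \<Rightarrow> 'a \<Rightarrow> complex" where
  "psmult c f = (\<lambda>p. c * f p)"
definition pneg :: "('a \<Rightarrow> complex) \<Rightarrow> 'a \<Rightarrow> complex" where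
  "pneg f = (\<lambda>p. - f p)"

definition setsum :: "('a \<Rightarrow> complex) set \<Rightarrow> ('a \<Rightarrow> complex) set \<Rightarrow> ('a \<Rightarrow> complex) set" where
  "setsum A B = {padd a b | a b. a \<in> A \<and> b \<in> B}"

definition csupp :: "('a \<Rightarrow> complex) set \<Rightarrow> ('a \<Rightarrow> complex) set" where
  "csupp Q = Q \<inter> (pneg ` Q)"

definition Bset :: "'i::finite pol set" where
  "Bset = {f. finite {p. f p \<noteq> 0} \<and> (\<forall>K L. f (K, L) \<noteq> 0 \<longrightarrow> mabs K = mabs L)}"

text \<open>Unit 1 and the polynomial J = sum_j z_j zbar_j.\<close>
definition pone :: "'i::finite pol" where
  "pone = (\<lambda>(K, L). if K = (\<lambda>_. 0) \<and> L = (\<lambda>_. 0) then 1 else 0)"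

definition Jpol :: "'i::finite pol" where
  "Jpol = (\<lambda>(K, L). if \<exists>j. K = (\<lambda>i. if i = j then 1 else 0) \<and> L = K then 1 else 0)"

text \<open>Involution: pointwise complex conjugation of the polynomial function;
  conj(sum a_{K,L} z^K zbar^L) = sum conj(a_{K,L}) z^L zbar^K.\<close>
definition pstar :: "'i::finite pol \<Rightarrow> 'i pol" where
  "pstar f = (\<lambda>(K, L). cnj (f (L, K)))"

definition hermitian :: "'i::finite pol \<Rightarrow> bool" where
  "hermitian f \<longleftrightarrow> pstar f = f"

text \<open>Pointwise product of polynomials (Cauchy product of coefficients).\<close>
definition pmult :: "'i::finite pol \<Rightarrow> 'i pol \<Rightarrow> 'i pol" where
  "pmult f g = (\<lambda>(P, Q). \<Sum>(A, B) \<in> {(A, B). A \<le> P \<and> B \<le> Q}.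
      f (A, B) * g (\<lambda>i. P i - A i, \<lambda>i. Q i - B i))"

text \<open>Partial derivatives: d^K/dz^K (z^(A+K) zbar^B) = (A+K)!/A! z^A zbar^B, and similarly in zbar.\<close>
definition dz :: "'i::finite mi \<Rightarrow> 'i pol \<Rightarrow> 'i pol" where
  "dz K f = (\<lambda>(A, B). of_real (\<Prod>i\<in>UNIV. fact (A i + K i) / fact (A i)) * f (\<lambda>i. A i + K i, B))"

definition dzbar :: "'i::finite mi \<Rightarrow> 'i pol \<Rightarrow> 'i pol" where
  "dzbar L f = (\<lambda>(A, B). of_real (\<Prod>i\<in>UNIV. fact (B i + L i) / fact (B i)) * f (A, \<lambda>i. B i + L i))"

text \<open>Wick product: f \<star> g = sum_K hbar^|K|/K! (d^K f/dzbar^K) (d^K g/dz^K).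
  Only finitely many K contribute (those with K \<le> B for some (A,B) in the support of f).\<close>
definition wick :: "real \<Rightarrow> 'i::finite pol \<Rightarrow> 'i pol \<Rightarrow> 'i pol" where
  "wick h f g = (\<lambda>p. \<Sum>K \<in> {K. \<exists>A B. f (A, B) \<noteq> 0 \<and> K \<le> B}.
      of_real (h ^ mabs K / real (mfact K)) * pmult (dzbar K f) (dz K g) p)"

definition Bpp :: "real \<Rightarrow> 'i::finite pol set" where
  "Bpp h = {f. \<exists>as. set as \<subseteq> Bset \<and>
      f = foldr (\<lambda>a s. padd (wick h (pstar a) a) s) as (\<lambda>_. 0)}"

text \<open>Fock space: polynomials in z, inner product <z^K, z^L> = delta_{KL} hbar^|K| K!.\<close>
definition Fock :: "'i::finite fock set" where
  "Fock = {g. finite {K. g K \<noteq> 0}}"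

definition finner :: "real \<Rightarrow> 'i::finite fock \<Rightarrow> 'i fock \<Rightarrow> complex" where
  "finner h g g' = (\<Sum>K \<in> {K. g K \<noteq> 0}. cnj (g K) * g' K * of_real (h ^ mabs K * real (mfact K)))"

definition fdz :: "'i::finite mi \<Rightarrow> 'i fock \<Rightarrow> 'i fock" where
  "fdz L g = (\<lambda>C. of_real (\<Prod>i\<in>UNIV. fact (C i + L i) / fact (C i)) * g (\<lambda>i. C i + L i))"

definition fzmult :: "'i::finite mi \<Rightarrow> 'i fock \<Rightarrow> 'i fock" where
  "fzmult K g = (\<lambda>P. if K \<le> P then g (\<lambda>i. P i - K i) else 0)"

text \<open>pi_hbar (z^K zbar^L) = z^K hbar^|L| d^|L|/dz^L, extended linearly.\<close>
definition piop :: "real \<Rightarrow> 'i::finite pol \<Rightarrow> 'i fock \<Rightarrow> 'i fock" where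
  "piop h f g = (\<lambda>P. \<Sum>(K, L) \<in> {p. f p \<noteq> 0}.
      f (K, L) * of_real (h ^ mabs L) * fzmult K (fdz L g) P)"

definition Bplus :: "real \<Rightarrow> 'i::finite pol set" where
  "Bplus h = {f \<in> Bset. hermitian f \<and> (\<forall>g \<in> Fock. 0 \<le> finner h g (piop h f g))}"

definition is_state :: "real \<Rightarrow> ('i::finite pol \<Rightarrow> complex) \<Rightarrow> bool" where
  "is_state h \<omega> \<longleftrightarrow>
     (\<forall>f \<in> Bset. \<forall>g \<in> Bset. \<omega> (padd f g) = \<omega> f + \<omega> g) \<and>
     (\<forall>f \<in> Bset. \<forall>c. \<omega> (psmult c f) = c * \<omega> f) \<and>
     \<omega> pone = 1 \<and>
     (\<forall>f \<in> Bset. hermitian f \<longrightarrow> \<omega> f \<in> \<real>) \<and>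
     (\<forall>f \<in> Bplus h. 0 \<le> \<omega> f)"

definition Rset :: "real \<Rightarrow> real \<Rightarrow> 'i::finite pol set" where
  "Rset h \<mu> = {f \<in> Bset. hermitian f \<and>
     (\<forall>\<omega>. is_state h \<omega> \<and>
        \<omega> (wick h (padd Jpol (psmult (- of_real \<mu>) pone)) (padd Jpol (psmult (- of_real \<mu>) pone))) = 0
        \<longrightarrow> 0 \<le> \<omega> f)}"

end

theory Submission
  imports Defs "HOL-Library.Function_Algebras" "HOL-Library.FuncSet"
begin


lemma finite_box: "finite {A::'i::finite \<Rightarrow> nat. A \<le> P}"
proof -
  have "{A::'i \<Rightarrow> nat. A \<le> P} \<subseteq> PiE UNIV (\<lambda>i. {..P i})" by (auto simp: le_fun_def)
  thus ?thesis by (rule finite_subset) (simp add: finite_PiE)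
qed

lemma finite_box2: "finite {(A::'i::finite \<Rightarrow> nat, B::'i \<Rightarrow> nat). A \<le> P \<and> B \<le> Q}"
proof -
  have "{(A::'i \<Rightarrow> nat, B::'i \<Rightarrow> nat). A \<le> P \<and> B \<le> Q} = {A. A \<le> P} \<times> {B. B \<le> Q}" by auto
  thus ?thesis by (simp add: finite_box finite_cartesian_product)
qed

definition dl :: "'a \<Rightarrow> 'a \<Rightarrow> complex" where "dl p = (\<lambda>q. if q = p then 1 else 0)"

lemma expand_dl: "finite F \<Longrightarrow> {p. f p \<noteq> 0} \<subseteq> F \<Longrightarrow> (\<Sum>p\<in>F. f p * dl p q) = f q"
proof -
  assume F: "finite F" "{p. f p \<noteq> 0} \<subseteq> F"
  have "(\<Sum>p\<in>F. f p * dl p q) = (\<Sum>p\<in>F. if p = q then f q else 0)"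
    by (rule sum.cong) (auto simp: dl_def)
  also have "\<dots> = f q" using F by (auto simp: sum.delta')
  finally show ?thesis .
qed

lemma dzbar_alt: "dzbar K f (A,B) = of_real (\<Prod>i\<in>UNIV. fact (B i + K i) / fact (B i)) * f (A, B + K)"
  by (simp add: dzbar_def plus_fun_def)
lemma dz_alt: "dz K f (A,B) = of_real (\<Prod>i\<in>UNIV. fact (A i + K i) / fact (A i)) * f (A + K, B)"
  by (simp add: dz_def plus_fun_def)
lemma pmult_alt: "pmult f g (P,Q) = (\<Sum>(A, B) \<in> {(A, B). A \<le> P \<and> B \<le> Q}. f (A, B) * g (P - A, Q - B))"
  by (simp add: pmult_def fun_diff_def)

lemma dzbar_sum: "dzbar K (\<lambda>q. \<Sum>p\<in>F. a p * \<phi> p q) r = (\<Sum>p\<in>F. a p * dzbar K (\<phi> p) r)"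
  by (cases r) (simp add: dzbar_alt sum_distrib_right mult_ac)
lemma dz_sum: "dz K (\<lambda>q. \<Sum>p\<in>F. a p * \<phi> p q) r = (\<Sum>p\<in>F. a p * dz K (\<phi> p) r)"
  by (cases r) (simp add: dz_alt sum_distrib_right mult_ac)

lemma pmult_sum:
  "pmult (\<lambda>q. \<Sum>p\<in>F. a p * \<phi> p q) (\<lambda>q. \<Sum>p'\<in>G. b p' * \<psi> p' q) r
   = (\<Sum>p\<in>F. \<Sum>p'\<in>G. a p * b p' * pmult (\<phi> p) (\<psi> p') r)"
proof (cases r)
  case (Pair P Q)
  let ?X = "{(A, B). A \<le> P \<and> B \<le> Q}"
  have "pmult (\<lambda>q. \<Sum>p\<in>F. a p * \<phi> p q) (\<lambda>q. \<Sum>p'\<in>G. b p' * \<psi> p' q) r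
     = (\<Sum>x\<in>?X. (\<Sum>p\<in>F. a p * \<phi> p x) * (\<Sum>p'\<in>G. b p' * \<psi> p' (P - fst x, Q - snd x)))"
    unfolding Pair pmult_alt by (rule sum.cong) auto
  also have "\<dots> = (\<Sum>x\<in>?X. \<Sum>p\<in>F. \<Sum>p'\<in>G. a p * b p' * (\<phi> p x * \<psi> p' (P - fst x, Q - snd x)))"
    by (simp add: sum_product mult_ac)
  also have "\<dots> = (\<Sum>p\<in>F. \<Sum>x\<in>?X. \<Sum>p'\<in>G. a p * b p' * (\<phi> p x * \<psi> p' (P - fst x, Q - snd x)))"
    by (rule sum.swap)
  also have "\<dots> = (\<Sum>p\<in>F. \<Sum>p'\<in>G. \<Sum>x\<in>?X. a p * b p' * (\<phi> p x * \<psi> p' (P - fst x, Q - snd x)))"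
    by (rule sum.cong[OF refl], rule sum.swap)
  also have "\<dots> = (\<Sum>p\<in>F. \<Sum>p'\<in>G. a p * b p' * pmult (\<phi> p) (\<psi> p') r)"
    unfolding Pair pmult_alt
    by (intro sum.cong refl) (auto simp: sum_distrib_left split_def)
  finally show ?thesis .
qed

definition wS :: "'i::finite pol \<Rightarrow> 'i mi set" where
  "wS f = {K. \<exists>A B. f (A, B) \<noteq> 0 \<and> K \<le> B}"

lemma finite_wS: assumes "finite {p. f p \<noteq> 0}" shows "finite (wS f)"
proof -
  have "wS f \<subseteq> (\<Union>p\<in>{p. f p \<noteq> 0}. {K. K \<le> snd p})" by (force simp: wS_def)
  moreover have "finite (\<Union>p\<in>{p. f p \<noteq> 0}. {K. K \<le> snd p})"
    using assms finite_box by blast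
  ultimately show ?thesis by (rule finite_subset)
qed

definition wterm :: "real \<Rightarrow> 'i::finite pol \<Rightarrow> 'i pol \<Rightarrow> 'i mi \<Rightarrow> 'i mi \<times> 'i mi \<Rightarrow> complex" where
  "wterm h f g K p = of_real (h ^ mabs K / real (mfact K)) * pmult (dzbar K f) (dz K g) p"

lemma wterm_zero: assumes "K \<notin> wS f" shows "wterm h f g K p = 0"
proof -
  have "dzbar K f = (\<lambda>_. 0)"
  proof
    fix x show "dzbar K f x = 0"
    proof (cases x)
      case (Pair A B)
      have "K \<le> B + K" by (simp add: le_fun_def)
      hence "f (A, B + K) = 0" using assms by (auto simp: wS_def)
      thus ?thesis by (simp add: Pair dzbar_alt)
    qed
  qed
  thus ?thesis by (cases p) (simp add: wterm_def pmult_alt)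
qed

lemma wick_superset:
  assumes "finite T" "wS f \<subseteq> T"
  shows "wick h f g p = (\<Sum>K\<in>T. wterm h f g K p)"
proof -
  have "wick h f g p = (\<Sum>K\<in>wS f. wterm h f g K p)"
    by (simp add: wick_def wterm_def wS_def)
  also have "\<dots> = (\<Sum>K\<in>T. wterm h f g K p)"
    using assms by (intro sum.mono_neutral_left) (auto simp: wterm_zero)
  finally show ?thesis .
qed

lemma wS_dl: "wS (dl (A, B)) = {K. K \<le> B}"
  by (auto simp: wS_def dl_def)

lemma wick_expand:
  assumes F: "finite F" "{p. f p \<noteq> 0} \<subseteq> F" and G: "finite G" "{p. g p \<noteq> 0} \<subseteq> G"
  shows "wick h f g r = (\<Sum>p\<in>F. \<Sum>q\<in>G. f p * g q * wick h (dl p) (dl q) r)"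
proof -
  define T where "T = (\<Union>p\<in>F. {K. K \<le> snd p})"
  have T: "finite T" using F finite_box by (auto simp: T_def)
  have fT: "wS f \<subseteq> T" using F by (force simp: wS_def T_def)
  have pT: "wS (dl p) \<subseteq> T" if "p \<in> F" for p
    using that by (cases p) (force simp: wS_dl T_def)
  have ef: "f = (\<lambda>q. \<Sum>p\<in>F. f p * dl p q)" using F by (simp add: expand_dl)
  have eg: "g = (\<lambda>q. \<Sum>p\<in>G. g p * dl p q)" using G by (simp add: expand_dl)
  have "wick h f g r = (\<Sum>K\<in>T. wterm h f g K r)" by (rule wick_superset[OF T fT])
  also have "\<dots> = (\<Sum>K\<in>T. \<Sum>p\<in>F. \<Sum>q\<in>G. f p * g q * wterm h (dl p) (dl q) K r)"
  proof (rule sum.cong[OF refl])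
    fix K
    have "dzbar K f = (\<lambda>x. \<Sum>p\<in>F. f p * dzbar K (dl p) x)"
    proof
      fix x
      have "dzbar K f x = dzbar K (\<lambda>q. \<Sum>p\<in>F. f p * dl p q) x"
        by (rule arg_cong[of _ _ "\<lambda>z. dzbar K z x"], rule ef)
      thus "dzbar K f x = (\<Sum>p\<in>F. f p * dzbar K (dl p) x)" by (simp only: dzbar_sum)
    qed
    moreover have "dz K g = (\<lambda>x. \<Sum>p\<in>G. g p * dz K (dl p) x)"
    proof
      fix x
      have "dz K g x = dz K (\<lambda>q. \<Sum>p\<in>G. g p * dl p q) x"
        by (rule arg_cong[of _ _ "\<lambda>z. dz K z x"], rule eg)
      thus "dz K g x = (\<Sum>p\<in>G. g p * dz K (dl p) x)" by (simp only: dz_sum)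
    qed
    ultimately show "wterm h f g K r = (\<Sum>p\<in>F. \<Sum>q\<in>G. f p * g q * wterm h (dl p) (dl q) K r)"
      by (simp add: wterm_def pmult_sum sum_distrib_left mult_ac)
  qed
  also have "\<dots> = (\<Sum>p\<in>F. \<Sum>q\<in>G. \<Sum>K\<in>T. f p * g q * wterm h (dl p) (dl q) K r)"
    by (subst sum.swap, rule sum.cong[OF refl], rule sum.swap)
  also have "\<dots> = (\<Sum>p\<in>F. \<Sum>q\<in>G. f p * g q * wick h (dl p) (dl q) r)"
    by (intro sum.cong refl) (simp add: sum_distrib_left[symmetric] wick_superset[OF T pT])
  finally show ?thesis .
qed

definition fr :: "'i::finite mi \<Rightarrow> 'i mi \<Rightarrow> real" where
  "fr B K = (\<Prod>i\<in>UNIV. fact (B i) / fact (B i - K i))"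

definition wc :: "real \<Rightarrow> 'i::finite mi \<Rightarrow> 'i mi \<Rightarrow> 'i mi \<Rightarrow> real" where
  "wc h B C K = h ^ mabs K / real (mfact K) * fr B K * fr C K"

lemma cond_eq1:
  fixes A P K C B' Q D :: "'i \<Rightarrow> nat"
  shows "(A \<le> P \<and> B' \<le> Q \<and> P - A + K = C \<and> Q - B' = D) \<longleftrightarrow> (K \<le> C \<and> P = A + (C - K) \<and> Q = B' + D)"
proof -
  have "\<forall>i. (A i \<le> P i \<and> B' i \<le> Q i \<and> P i - A i + K i = C i \<and> Q i - B' i = D i) \<longleftrightarrow> (K i \<le> C i \<and> P i = A i + (C i - K i) \<and> Q i = B' i + D i)"
    by (intro allI) arith
  thus ?thesis unfolding le_fun_def fun_eq_iff plus_fun_apply fun_diff_def by blast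
qed

lemma pmult_dl:
  fixes A B C D P Q K :: "'i::finite mi"
  assumes KB: "K \<le> B"
  shows "pmult (dzbar K (dl (A, B))) (dz K (dl (C, D))) (P, Q)
    = of_real (fr B K * fr C K) * (if K \<le> C \<and> P = A + (C - K) \<and> Q = (B - K) + D then 1 else 0)"
proof -
  let ?X = "{(A', B'). A' \<le> P \<and> B' \<le> Q}"
  let ?t = "\<lambda>(A', B'). dzbar K (dl (A, B)) (A', B') * dz K (dl (C, D)) (P - A', Q - B')"
  have eqB: "(B' + K = B) \<longleftrightarrow> B' = B - K" for B' :: "'i \<Rightarrow> nat"
  proof -
    have "\<forall>i. (B' i + K i = B i) \<longleftrightarrow> B' i = B i - K i" using KB by (auto simp: le_fun_def)
    thus ?thesis unfolding fun_eq_iff plus_fun_apply fun_diff_def by blast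
  qed
  have "pmult (dzbar K (dl (A, B))) (dz K (dl (C, D))) (P, Q) = (\<Sum>x\<in>?X. ?t x)"
    by (simp add: pmult_alt)
  also have "\<dots> = (\<Sum>x\<in>?X. if x = (A, B - K) then ?t (A, B - K) else 0)"
    by (rule sum.cong) (auto simp: dzbar_alt dl_def eqB split: if_splits)
  also have "\<dots> = (if (A, B - K) \<in> ?X then ?t (A, B - K) else 0)"
    using finite_box2[of P Q] by (simp add: sum.delta')
  also have "\<dots> = of_real (fr B K * fr C K) * (if K \<le> C \<and> P = A + (C - K) \<and> Q = (B - K) + D then 1 else 0)"
  proof -
    have BK: "B - K + K = B" using KB by (simp add: le_fun_def fun_eq_iff)
    have frB: "(\<Prod>i\<in>UNIV. fact ((B - K) i + K i) / fact ((B - K) i)) = fr B K"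
      unfolding fr_def using KB by (intro prod.cong refl) (simp add: le_fun_def)
    show ?thesis
    proof (cases "K \<le> C \<and> P = A + (C - K) \<and> Q = (B - K) + D")
      case True
      hence PA: "P - A = C - K" and QB: "Q - (B - K) = D" by (auto simp: fun_eq_iff)
      have frC: "(\<Prod>i\<in>UNIV. fact ((C - K) i + K i) / fact ((C - K) i)) = fr C K"
        unfolding fr_def using True by (intro prod.cong refl) (simp add: le_fun_def)
      have CK: "C - K + K = C" using True by (simp add: le_fun_def fun_eq_iff)
      have "A \<le> A + (C - K)" "B - K \<le> B - K + D" by (simp_all add: le_fun_def)
      hence "A \<le> P" "B - K \<le> Q" using True by simp_all
      hence "(A, B - K) \<in> ?X" by simp
      have "?t (A, B - K) = of_real (\<Prod>i\<in>UNIV. fact ((B - K) i + K i) / fact ((B - K) i)) * dl (A, B) (A, B - K + K)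
          * (of_real (\<Prod>i\<in>UNIV. fact ((P - A) i + K i) / fact ((P - A) i)) * dl (C, D) (P - A + K, Q - (B - K)))"
        by (simp only: dzbar_alt dz_alt split)
      also have "\<dots> = of_real (fr B K * fr C K)"
        by (simp only: frB PA frC BK QB CK) (simp add: dl_def)
      finally show ?thesis using True \<open>(A, B - K) \<in> ?X\<close> by simp
    next
      case False
      hence "\<not> (A \<le> P \<and> B - K \<le> Q \<and> P - A + K = C \<and> Q - (B - K) = D)"
        using cond_eq1[of A P "B - K" Q K C D] by simp
      thus ?thesis using False by (auto simp: dzbar_alt dz_alt dl_def BK)
    qed
  qed
  finally show ?thesis .
qed

lemma wick_dl:
  fixes A B C D P Q :: "'i::finite mi"
  shows "wick h (dl (A, B)) (dl (C, D)) (P, Q) =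
     (\<Sum>K\<in>{K. K \<le> B}. of_real (wc h B C K) *
        (if K \<le> C \<and> P = A + (C - K) \<and> Q = (B - K) + D then 1 else 0))"
proof -
  have "wick h (dl (A, B)) (dl (C, D)) (P, Q) = (\<Sum>K\<in>{K. K \<le> B}. wterm h (dl (A, B)) (dl (C, D)) K (P, Q))"
    by (rule wick_superset) (auto simp: finite_box wS_dl)
  also have "\<dots> = (\<Sum>K\<in>{K. K \<le> B}. of_real (wc h B C K) *
        (if K \<le> C \<and> P = A + (C - K) \<and> Q = (B - K) + D then 1 else 0))"
    by (rule sum.cong) (auto simp: wterm_def pmult_dl wc_def)
  finally show ?thesis .
qed


lemma coord:
  fixes b c x d :: nat
  shows "(\<Sum>k\<le>c. real (b choose k) * real (x choose (c - k)) * fact c * fact (x + b - c + d) / fact x)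
     = (if c \<le> x + b then fact (x + b) / fact x * (fact (x + b - c + d) / fact (x + b - c)) else 0)"
proof -
  have "(\<Sum>k\<le>c. real (b choose k) * real (x choose (c - k)) * fact c * fact (x + b - c + d) / fact x)
      = real (\<Sum>k\<le>c. (b choose k) * (x choose (c - k))) * fact c * fact (x + b - c + d) / fact x"
    by (simp add: sum_distrib_right sum_divide_distrib)
  also have "(\<Sum>k\<le>c. (b choose k) * (x choose (c - k))) = (b + x) choose c" by (rule vandermonde)
  finally have eq: "(\<Sum>k\<le>c. real (b choose k) * real (x choose (c - k)) * fact c * fact (x + b - c + d) / fact x)
      = real ((b + x) choose c) * fact c * fact (x + b - c + d) / fact x" .
  show ?thesis
  proof (cases "c \<le> x + b")
    case True
    have "real ((b + x) choose c) = fact (x + b) / (fact c * fact (x + b - c))"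
      using True by (simp add: binomial_fact add.commute)
    have "real ((b + x) choose c) * fact c * fact (x + b - c + d) / fact x
       = fact (x + b) / fact x * (fact (x + b - c + d) / fact (x + b - c))"
      unfolding \<open>real ((b + x) choose c) = _\<close> by (simp add: field_simps)
    thus ?thesis using True eq by simp
  next
    case False thus ?thesis using eq by simp
  qed
qed

lemma coord_term:
  fixes b c x d k :: nat
  assumes "k \<le> b" "k \<le> c" "c - k \<le> x"
  shows "1 / fact k * (fact b / fact (b - k)) * (fact c / fact (c - k)) * (fact (x - (c - k) + (b - k + d)) / fact (x - (c - k)))
     = real (b choose k) * real (x choose (c - k)) * fact c * fact (x + b - c + d) / fact x"
proof -
  have e1: "x - (c - k) + (b - k + d) = x + b - c + d" using assms by simp
  have b1: "real (b choose k) = fact b / (fact k * fact (b - k))" using assms by (simp add: binomial_fact)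
  have b2: "real (x choose (c - k)) = fact x / (fact (c - k) * fact (x - (c - k)))" using assms by (simp add: binomial_fact)
  show ?thesis unfolding e1 b1 b2 by (simp add: field_simps)
qed

definition pm :: "real \<Rightarrow> 'i::finite mi \<Rightarrow> 'i mi \<Rightarrow> 'i fock \<Rightarrow> 'i fock" where
  "pm h K L u = (\<lambda>P. of_real (h ^ mabs L) * fzmult K (fdz L u) P)"

lemma pm_alt: "pm h K L u P = (if K \<le> P then of_real (h ^ mabs L * (\<Prod>i\<in>UNIV. fact ((P - K) i + L i) / fact ((P - K) i))) * u (P - K + L) else 0)"
  by (simp add: pm_def fzmult_def fdz_def plus_fun_def fun_diff_def)

lemma piop_alt: "piop h f u P = (\<Sum>p\<in>{p. f p \<noteq> 0}. f p * pm h (fst p) (snd p) u P)"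
  unfolding piop_def pm_def by (intro sum.cong refl) (auto simp: mult_ac)

lemma piop_superset:
  assumes "finite F" "{p. f p \<noteq> 0} \<subseteq> F"
  shows "piop h f u P = (\<Sum>p\<in>F. f p * pm h (fst p) (snd p) u P)"
  unfolding piop_alt using assms by (intro sum.mono_neutral_left) auto

lemma mabs_add: "mabs (A + B) = mabs A + mabs B"
  by (simp add: mabs_def sum.distrib)

lemma mabs_sub: "K \<le> B \<Longrightarrow> mabs (B - K) + mabs K = mabs B"
  unfolding mabs_def by (subst sum.distrib[symmetric]) (auto intro!: sum.cong simp: le_fun_def)

lemma box_PiE: "{K::'i::finite mi. K \<le> C} = PiE UNIV (\<lambda>i. {..C i})"
  by (auto simp: le_fun_def PiE_def Pi_def extensional_def)

lemma pm_comp: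
  fixes A B C D P :: "'i::finite mi"
  shows "(\<Sum>K\<in>{K. K \<le> C}. if K \<le> B then of_real (wc h B C K) * pm h (A + (C - K)) (B - K + D) u P else 0)
        = pm h A B (pm h C D u) P"
proof (cases "A \<le> P")
  case False
  have "\<not> A + (C - K) \<le> P" for K
  proof
    assume "A + (C - K) \<le> P"
    moreover have "A \<le> A + (C - K)" by (simp add: le_fun_def)
    ultimately show False using False by (meson order_trans)
  qed
  hence "(\<Sum>K\<in>{K. K \<le> C}. if K \<le> B then of_real (wc h B C K) * pm h (A + (C - K)) (B - K + D) u P else 0) = 0"
    by (intro sum.neutral) (simp add: pm_alt)
  moreover have "pm h A B (pm h C D u) P = 0" using False by (simp add: pm_alt)
  ultimately show ?thesis by simp
next
  case AP: True
  define X where "X = P - A"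
  define Y where "Y = X + B - C + D"
  define \<phi> where "\<phi> i k = real (B i choose k) * real (X i choose (C i - k)) * fact (C i) * fact (X i + B i - C i + D i) / fact (X i)" for i k
  have trm: "(if K \<le> B then of_real (wc h B C K) * pm h (A + (C - K)) (B - K + D) u P else 0)
     = of_real (h ^ (mabs B + mabs D) * (\<Prod>i\<in>UNIV. \<phi> i (K i))) * u Y" if KC: "K \<le> C" for K
  proof (cases "K \<le> B \<and> C - K \<le> X")
    case True
    hence KB: "K \<le> B" and CKX: "C - K \<le> X" by auto
    have le: "A + (C - K) \<le> P"
    proof (unfold le_fun_def, intro allI)
      fix i
      have "C i - K i \<le> P i - A i" "A i \<le> P i" using CKX AP by (auto simp: le_fun_def X_def)
      thus "(A + (C - K)) i \<le> P i" by simp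
    qed
    have e1: "P - (A + (C - K)) = X - (C - K)" by (auto simp: X_def fun_eq_iff)
    have e2: "X - (C - K) + (B - K + D) = Y"
    proof (rule ext)
      fix i
      have "K i \<le> B i" "K i \<le> C i" "C i - K i \<le> X i" using KB KC CKX by (auto simp: le_fun_def)
      thus "(X - (C - K) + (B - K + D)) i = Y i" by (simp add: Y_def)
    qed
    have hh: "h ^ mabs K * h ^ mabs (B - K + D) = h ^ (mabs B + mabs D)"
    proof -
      have e: "mabs K + (mabs (B - K) + mabs D) = mabs B + mabs D" using mabs_sub[OF KB] by linarith
      have "h ^ mabs K * h ^ mabs (B - K + D) = h ^ (mabs K + (mabs (B - K) + mabs D))"
        by (simp add: mabs_add power_add)
      thus ?thesis by (simp only: e)
    qed
    have "wc h B C K * (h ^ mabs (B - K + D) * (\<Prod>i\<in>UNIV. fact ((X - (C - K)) i + (B - K + D) i) / fact ((X - (C - K)) i)))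
       = h ^ mabs K * h ^ mabs (B - K + D) * (\<Prod>i\<in>UNIV. 1 / fact (K i) * (fact (B i) / fact (B i - K i)) * (fact (C i) / fact (C i - K i))
           * (fact (X i - (C i - K i) + (B i - K i + D i)) / fact (X i - (C i - K i))))"
      by (simp add: wc_def fr_def mfact_def prod.distrib prod_dividef field_simps)
    also have "(\<Prod>i\<in>UNIV. 1 / fact (K i) * (fact (B i) / fact (B i - K i)) * (fact (C i) / fact (C i - K i))
           * (fact (X i - (C i - K i) + (B i - K i + D i)) / fact (X i - (C i - K i)))) = (\<Prod>i\<in>UNIV. \<phi> i (K i))"
      unfolding \<phi>_def using KB KC CKX by (intro prod.cong refl coord_term) (auto simp: le_fun_def)
    finally have calc: "wc h B C K * (h ^ mabs (B - K + D) * (\<Prod>i\<in>UNIV. fact ((X - (C - K)) i + (B - K + D) i) / fact ((X - (C - K)) i)))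
       = h ^ (mabs B + mabs D) * (\<Prod>i\<in>UNIV. \<phi> i (K i))" unfolding hh .
    have pmv: "pm h (A + (C - K)) (B - K + D) u P = of_real (h ^ mabs (B - K + D) * (\<Prod>i\<in>UNIV. fact ((X - (C - K)) i + (B - K + D) i) / fact ((X - (C - K)) i))) * u Y"
      using le by (simp only: pm_alt e1 e2 if_True)
    show ?thesis using KB by (simp only: pmv if_True calc[symmetric] of_real_mult mult.assoc)
  next
    case False
    have z: "(\<Prod>i\<in>UNIV. \<phi> i (K i)) = 0"
    proof -
      from False obtain i where "\<not> K i \<le> B i \<or> \<not> C i - K i \<le> X i" by (auto simp: le_fun_def)
      hence "\<phi> i (K i) = 0" by (auto simp: \<phi>_def)
      thus ?thesis by (intro prod_zero) auto
    qed
    have "\<not> K \<le> B \<or> \<not> A + (C - K) \<le> P"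
    proof (cases "K \<le> B")
      case True
      hence "\<not> C - K \<le> X" using False by simp
      then obtain i where "\<not> C i - K i \<le> X i" by (auto simp: le_fun_def)
      hence "\<not> A i + (C i - K i) \<le> P i" by (auto simp: X_def)
      thus ?thesis by (auto simp: le_fun_def)
    qed simp
    thus ?thesis using z by (auto simp: pm_alt)
  qed
  have "(\<Sum>K\<in>{K. K \<le> C}. if K \<le> B then of_real (wc h B C K) * pm h (A + (C - K)) (B - K + D) u P else 0)
      = (\<Sum>K\<in>{K. K \<le> C}. of_real (h ^ (mabs B + mabs D) * (\<Prod>i\<in>UNIV. \<phi> i (K i))) * u Y)"
    by (rule sum.cong) (auto simp: trm)
  also have "\<dots> = of_real (h ^ (mabs B + mabs D) * (\<Sum>K\<in>{K. K \<le> C}. \<Prod>i\<in>UNIV. \<phi> i (K i))) * u Y"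
    by (simp add: sum_distrib_left sum_distrib_right)
  also have "(\<Sum>K\<in>{K. K \<le> C}. \<Prod>i\<in>UNIV. \<phi> i (K i)) = (\<Prod>i\<in>UNIV. \<Sum>k\<le>C i. \<phi> i k)"
    unfolding box_PiE by (rule prod_sum_PiE[symmetric]) auto
  also have "\<dots> = (\<Prod>i\<in>UNIV. if C i \<le> X i + B i then fact (X i + B i) / fact (X i) * (fact (X i + B i - C i + D i) / fact (X i + B i - C i)) else 0)"
    unfolding \<phi>_def by (intro prod.cong refl coord)
  also have "of_real (h ^ (mabs B + mabs D) * \<dots>) * u Y = pm h A B (pm h C D u) P"
  proof (cases "C \<le> X + B")
    case True
    have pr: "(\<Prod>i\<in>UNIV. if C i \<le> X i + B i then fact (X i + B i) / fact (X i) * (fact (X i + B i - C i + D i) / fact (X i + B i - C i)) else 0)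
        = (\<Prod>i\<in>UNIV. fact (X i + B i) / fact (X i)) * (\<Prod>i\<in>UNIV. fact (X i + B i - C i + D i) / fact (X i + B i - C i))"
      using True by (subst prod.distrib[symmetric]) (auto intro!: prod.cong simp: le_fun_def)
    have r1: "pm h A B v P = of_real (h ^ mabs B * (\<Prod>i\<in>UNIV. fact (X i + B i) / fact (X i))) * v (X + B)" for v
      using AP by (simp add: pm_alt X_def)
    have r2: "pm h C D u (X + B) = of_real (h ^ mabs D * (\<Prod>i\<in>UNIV. fact (X i + B i - C i + D i) / fact (X i + B i - C i))) * u Y"
      using True by (simp add: pm_alt Y_def)
    show ?thesis unfolding pr r1 r2 by (simp add: power_add mult_ac del: of_real_prod)
  next
    case False
    then obtain j where j: "\<not> C j \<le> X j + B j" by (auto simp: le_fun_def)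
    have "(\<Prod>i\<in>UNIV. if C i \<le> X i + B i then fact (X i + B i) / fact (X i) * (fact (X i + B i - C i + D i) / fact (X i + B i - C i)) else 0) = (0::real)"
      by (rule prod_zero) (use j in auto)
    thus ?thesis using AP False by (simp add: pm_alt X_def)
  qed
  finally show ?thesis .
qed

lemma sp_wick_dl:
  fixes A B C D :: "'i::finite mi"
  shows "{r. wick h (dl (A, B)) (dl (C, D)) r \<noteq> 0} \<subseteq> (\<lambda>K. (A + (C - K), B - K + D)) ` {K. K \<le> B}"
proof
  fix r assume "r \<in> {r. wick h (dl (A, B)) (dl (C, D)) r \<noteq> 0}"
  then obtain P Q where r: "r = (P, Q)" and nz: "wick h (dl (A, B)) (dl (C, D)) (P, Q) \<noteq> 0" by (cases r) auto
  from nz obtain K where "K \<in> {K. K \<le> B}" "of_real (wc h B C K) * (if K \<le> C \<and> P = A + (C - K) \<and> Q = (B - K) + D then 1 else 0) \<noteq> (0::complex)"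
    unfolding wick_dl by (rule sum.not_neutral_contains_not_neutral)
  thus "r \<in> (\<lambda>K. (A + (C - K), B - K + D)) ` {K. K \<le> B}" using r by (auto split: if_splits)
qed

lemma finite_sp_wick_dl:
  fixes A B C D :: "'i::finite mi"
  shows "finite {r. wick h (dl (A, B)) (dl (C, D)) r \<noteq> 0}"
  by (rule finite_subset[OF sp_wick_dl]) (simp add: finite_box)

lemma piop_wick_dl:
  fixes A B C D :: "'i::finite mi"
  shows "piop h (wick h (dl (A, B)) (dl (C, D))) u P = pm h A B (pm h C D u) P"
proof -
  let ?W = "wick h (dl (A, B)) (dl (C, D))"
  let ?T = "(\<lambda>K. (A + (C - K), B - K + D)) ` {K. K \<le> B}"
  let ?r = "\<lambda>K. (A + (C - K), B - K + D)"
  have fT: "finite ?T" by (simp add: finite_box)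
  have "piop h ?W u P = (\<Sum>r\<in>?T. ?W r * pm h (fst r) (snd r) u P)"
    by (rule piop_superset[OF fT sp_wick_dl])
  also have "\<dots> = (\<Sum>r\<in>?T. \<Sum>K\<in>{K. K \<le> B}. of_real (wc h B C K) *
        (if K \<le> C \<and> fst r = A + (C - K) \<and> snd r = (B - K) + D then 1 else 0) * pm h (fst r) (snd r) u P)"
    by (intro sum.cong refl) (auto simp: wick_dl sum_distrib_right split: prod.splits)
  also have "\<dots> = (\<Sum>K\<in>{K. K \<le> B}. \<Sum>r\<in>?T. of_real (wc h B C K) *
        (if K \<le> C \<and> fst r = A + (C - K) \<and> snd r = (B - K) + D then 1 else 0) * pm h (fst r) (snd r) u P)"
    by (rule sum.swap)
  also have "\<dots> = (\<Sum>K\<in>{K. K \<le> B}. if K \<le> C then of_real (wc h B C K) * pm h (A + (C - K)) (B - K + D) u P else 0)"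
  proof (rule sum.cong[OF refl])
    fix K assume K: "K \<in> {K. K \<le> B}"
    have "(\<Sum>r\<in>?T. of_real (wc h B C K) *
        (if K \<le> C \<and> fst r = A + (C - K) \<and> snd r = (B - K) + D then 1 else 0) * pm h (fst r) (snd r) u P)
      = (\<Sum>r\<in>?T. if r = ?r K then (if K \<le> C then of_real (wc h B C K) * pm h (A + (C - K)) (B - K + D) u P else 0) else 0)"
      by (intro sum.cong refl) (auto simp: prod_eq_iff)
    also have "\<dots> = (if K \<le> C then of_real (wc h B C K) * pm h (A + (C - K)) (B - K + D) u P else 0)"
      using K fT by (simp add: sum.delta')
    finally show "(\<Sum>r\<in>?T. of_real (wc h B C K) *
        (if K \<le> C \<and> fst r = A + (C - K) \<and> snd r = (B - K) + D then 1 else 0) * pm h (fst r) (snd r) u P)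
      = (if K \<le> C then of_real (wc h B C K) * pm h (A + (C - K)) (B - K + D) u P else 0)" .
  qed
  also have "\<dots> = (\<Sum>K\<in>{K. K \<le> B \<and> K \<le> C}. of_real (wc h B C K) * pm h (A + (C - K)) (B - K + D) u P)"
    by (subst sum.inter_filter[symmetric]) (auto simp: finite_box)
  also have "\<dots> = (\<Sum>K\<in>{K. K \<le> C}. if K \<le> B then of_real (wc h B C K) * pm h (A + (C - K)) (B - K + D) u P else 0)"
    by (subst sum.inter_filter[symmetric]) (auto simp: finite_box intro!: sum.cong)
  also have "\<dots> = pm h A B (pm h C D u) P" by (rule pm_comp)
  finally show ?thesis .
qed

lemma pm_sum: "pm h K L (\<lambda>R. \<Sum>q\<in>G. c q * v q R) P = (\<Sum>q\<in>G. c q * pm h K L (v q) P)"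
  by (simp add: pm_alt sum_distrib_left sum_distrib_right mult_ac)

lemma piop_wick:
  assumes f: "finite {p. f p \<noteq> 0}" and g: "finite {p. g p \<noteq> 0}"
  shows "piop h (wick h f g) u P = piop h f (piop h g u) P"
proof -
  let ?F = "{p. f p \<noteq> 0}" and ?G = "{p. g p \<noteq> 0}"
  let ?W = "\<lambda>p q. wick h (dl p) (dl q)"
  define T where "T = (\<Union>p\<in>?F. \<Union>q\<in>?G. {r. ?W p q r \<noteq> 0})"
  have fW: "finite {r. ?W p q r \<noteq> 0}" for p q
    using finite_sp_wick_dl[of h "fst p" "snd p" "fst q" "snd q"] by simp
  have fT: "finite T" unfolding T_def using f g fW by blast
  have we: "wick h f g r = (\<Sum>p\<in>?F. \<Sum>q\<in>?G. f p * g q * ?W p q r)" for r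
    by (rule wick_expand) (use f g in auto)
  have spW: "{r. wick h f g r \<noteq> 0} \<subseteq> T"
  proof
    fix r assume "r \<in> {r. wick h f g r \<noteq> 0}"
    hence "(\<Sum>p\<in>?F. \<Sum>q\<in>?G. f p * g q * ?W p q r) \<noteq> 0" using we by simp
    then obtain p where p: "p \<in> ?F" "(\<Sum>q\<in>?G. f p * g q * ?W p q r) \<noteq> 0"
      by (rule sum.not_neutral_contains_not_neutral)
    from p(2) obtain q where q: "q \<in> ?G" "f p * g q * ?W p q r \<noteq> 0"
      by (rule sum.not_neutral_contains_not_neutral)
    hence "?W p q r \<noteq> 0" by simp
    thus "r \<in> T" unfolding T_def using p(1) q(1) by blast
  qed
  have spWpq: "{r. ?W p q r \<noteq> 0} \<subseteq> T" if "p \<in> ?F" "q \<in> ?G" for p q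
    using that unfolding T_def by blast
  have "piop h (wick h f g) u P = (\<Sum>r\<in>T. wick h f g r * pm h (fst r) (snd r) u P)"
    by (rule piop_superset[OF fT spW])
  also have "\<dots> = (\<Sum>r\<in>T. \<Sum>p\<in>?F. \<Sum>q\<in>?G. f p * g q * (?W p q r * pm h (fst r) (snd r) u P))"
    unfolding we by (simp add: sum_distrib_right sum_distrib_left mult_ac)
  also have "\<dots> = (\<Sum>p\<in>?F. \<Sum>q\<in>?G. \<Sum>r\<in>T. f p * g q * (?W p q r * pm h (fst r) (snd r) u P))"
    by (subst sum.swap, rule sum.cong[OF refl], rule sum.swap)
  also have "\<dots> = (\<Sum>p\<in>?F. \<Sum>q\<in>?G. f p * g q * piop h (?W p q) u P)"
    by (intro sum.cong refl) (simp add: sum_distrib_left[symmetric] piop_superset[OF fT spWpq])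
  also have "\<dots> = (\<Sum>p\<in>?F. \<Sum>q\<in>?G. f p * g q * pm h (fst p) (snd p) (pm h (fst q) (snd q) u) P)"
    using piop_wick_dl[of h "fst p" "snd p" "fst q" "snd q" u P for p q] by simp
  also have "\<dots> = piop h f (piop h g u) P"
    unfolding piop_alt[of h f] by (simp add: piop_alt[of h g, abs_def] pm_sum sum_distrib_left mult_ac)
  finally show ?thesis .
qed


abbreviation fs :: "('a \<Rightarrow> complex) \<Rightarrow> bool" where "fs f \<equiv> finite {p. f p \<noteq> 0}"

lemma fs_padd: "fs f \<Longrightarrow> fs g \<Longrightarrow> fs (padd f g)"
  by (rule finite_subset[of _ "{p. f p \<noteq> 0} \<union> {p. g p \<noteq> 0}"]) (auto simp: padd_def)
lemma fs_psmult: "fs f \<Longrightarrow> fs (psmult c f)"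
  by (rule finite_subset[of _ "{p. f p \<noteq> 0}"]) (auto simp: psmult_def)
lemma fs_pneg: "fs f \<Longrightarrow> fs (pneg f)"
  by (simp add: pneg_def)
lemma fs_pstar: "fs f \<Longrightarrow> fs (pstar f)"
proof -
  assume "fs f"
  moreover have "{p. pstar f p \<noteq> 0} = prod.swap ` {p. f p \<noteq> 0}"
    by (auto simp: pstar_def image_iff split: prod.splits)
  ultimately show ?thesis by simp
qed
lemma fs_dl: "fs (dl p)" by (simp add: dl_def)
lemma fs_zero: "fs (\<lambda>_. 0)" by simp

lemma sp_wick_sub:
  assumes f: "fs f" and g: "fs g"
  shows "{r. wick h f g r \<noteq> 0} \<subseteq> (\<Union>p\<in>{p. f p \<noteq> 0}. \<Union>q\<in>{p. g p \<noteq> 0}. {r. wick h (dl p) (dl q) r \<noteq> 0})"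
proof
  let ?F = "{p. f p \<noteq> 0}" and ?G = "{p. g p \<noteq> 0}"
  fix r assume "r \<in> {r. wick h f g r \<noteq> 0}"
  hence "(\<Sum>p\<in>?F. \<Sum>q\<in>?G. f p * g q * wick h (dl p) (dl q) r) \<noteq> 0"
    using wick_expand[of ?F f ?G g h r] f g by simp
  then obtain p where p: "p \<in> ?F" "(\<Sum>q\<in>?G. f p * g q * wick h (dl p) (dl q) r) \<noteq> 0"
    by (rule sum.not_neutral_contains_not_neutral)
  from p(2) obtain q where q: "q \<in> ?G" "f p * g q * wick h (dl p) (dl q) r \<noteq> 0"
    by (rule sum.not_neutral_contains_not_neutral)
  hence "wick h (dl p) (dl q) r \<noteq> 0" by simp
  thus "r \<in> (\<Union>p\<in>?F. \<Union>q\<in>?G. {r. wick h (dl p) (dl q) r \<noteq> 0})" using p(1) q(1) by blast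
qed

lemma fs_wick: assumes "fs f" "fs g" shows "fs (wick h f g)"
proof (rule finite_subset[OF sp_wick_sub[OF assms]])
  have "finite {r. wick h (dl p) (dl q) r \<noteq> 0}" for p q :: "'a::finite mi \<times> 'a mi"
    using finite_sp_wick_dl[of h "fst p" "snd p" "fst q" "snd q"] by simp
  thus "finite (\<Union>p\<in>{p. f p \<noteq> 0}. \<Union>q\<in>{p. g p \<noteq> 0}. {r. wick h (dl p) (dl q) r \<noteq> 0})"
    using assms by blast
qed

definition bideg :: "'i::finite pol \<Rightarrow> bool" where
  "bideg f \<longleftrightarrow> (\<forall>K L. f (K, L) \<noteq> 0 \<longrightarrow> mabs K = mabs L)"

lemma Bset_iff: "f \<in> Bset \<longleftrightarrow> fs f \<and> bideg f"
  by (simp add: Bset_def bideg_def)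

lemma bideg_wick:
  assumes f: "fs f" "bideg f" and g: "fs g" "bideg g"
  shows "bideg (wick h f g)"
  unfolding bideg_def
proof (intro allI impI)
  fix P Q assume "wick h f g (P, Q) \<noteq> 0"
  then obtain p q where p: "f p \<noteq> 0" and q: "g q \<noteq> 0" and w: "wick h (dl p) (dl q) (P, Q) \<noteq> 0"
    using sp_wick_sub[OF f(1) g(1), of h] by blast
  obtain A B where pAB: "p = (A, B)" by (cases p)
  obtain C D where qCD: "q = (C, D)" by (cases q)
  have AB: "mabs A = mabs B" using f(2) p pAB by (auto simp: bideg_def)
  have CD: "mabs C = mabs D" using g(2) q qCD by (auto simp: bideg_def)
  from w obtain K where "K \<in> {K. K \<le> B}"
     "of_real (wc h B C K) * (if K \<le> C \<and> P = A + (C - K) \<and> Q = (B - K) + D then 1 else 0) \<noteq> (0::complex)"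
    unfolding pAB qCD wick_dl by (rule sum.not_neutral_contains_not_neutral)
  hence K: "K \<le> B" "(P, Q) = (A + (C - K), B - K + D)" and KC: "K \<le> C" by (auto split: if_splits)
  have "mabs P + mabs K = mabs A + mabs C" using K KC mabs_sub[OF KC] by (simp add: mabs_add)
  moreover have "mabs Q + mabs K = mabs B + mabs D" using K mabs_sub[OF K(1)] by (simp add: mabs_add)
  ultimately show "mabs P = mabs Q" using AB CD by linarith
qed

lemma Bset_wick: "f \<in> Bset \<Longrightarrow> g \<in> Bset \<Longrightarrow> wick h f g \<in> Bset"
  by (simp add: Bset_iff fs_wick bideg_wick)

lemma Bset_padd: assumes "f \<in> Bset" "g \<in> Bset" shows "padd f g \<in> Bset"
proof -
  have "fs (padd f g)" using assms by (simp add: Bset_iff fs_padd)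
  moreover have "bideg (padd f g)" using assms unfolding Bset_iff bideg_def padd_def
    by (metis add.left_neutral add.right_neutral)
  ultimately show ?thesis by (simp add: Bset_iff)
qed
lemma Bset_psmult: "f \<in> Bset \<Longrightarrow> psmult c f \<in> Bset"
  by (auto simp: Bset_iff bideg_def fs_psmult psmult_def)
lemma Bset_pneg: "f \<in> Bset \<Longrightarrow> pneg f \<in> Bset"
  by (auto simp: Bset_iff bideg_def fs_pneg pneg_def)
lemma Bset_pstar: assumes "f \<in> Bset" shows "pstar f \<in> Bset"
proof -
  have "fs (pstar f)" using assms by (simp add: Bset_iff fs_pstar)
  moreover have "bideg (pstar f)" using assms unfolding Bset_iff bideg_def pstar_def by auto
  ultimately show ?thesis by (simp add: Bset_iff)
qed
lemma Bset_zero: "(\<lambda>_. 0) \<in> Bset"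
  by (simp add: Bset_iff bideg_def)

lemma pstar_pstar: "pstar (pstar f) = f"
  by (auto simp: pstar_def fun_eq_iff)

lemma wick_padd_left:
  assumes "fs f1" "fs f2" "fs g"
  shows "wick h (padd f1 f2) g = padd (wick h f1 g) (wick h f2 g)"
proof
  fix r
  let ?F = "{p. f1 p \<noteq> 0} \<union> {p. f2 p \<noteq> 0}" and ?G = "{p. g p \<noteq> 0}"
  have F: "finite ?F" using assms by simp
  have "wick h (padd f1 f2) g r = (\<Sum>p\<in>?F. \<Sum>q\<in>?G. padd f1 f2 p * g q * wick h (dl p) (dl q) r)"
    by (rule wick_expand) (use assms F in \<open>auto simp: padd_def\<close>)
  also have "\<dots> = (\<Sum>p\<in>?F. \<Sum>q\<in>?G. f1 p * g q * wick h (dl p) (dl q) r) + (\<Sum>p\<in>?F. \<Sum>q\<in>?G. f2 p * g q * wick h (dl p) (dl q) r)"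
    by (simp add: padd_def distrib_right sum.distrib)
  also have "\<dots> = wick h f1 g r + wick h f2 g r"
    by (subst (1 2) wick_expand[where F = ?F and G = ?G]) (use assms F in auto)
  finally show "wick h (padd f1 f2) g r = padd (wick h f1 g) (wick h f2 g) r" by (simp add: padd_def)
qed

lemma wick_padd_right:
  assumes "fs f" "fs g1" "fs g2"
  shows "wick h f (padd g1 g2) = padd (wick h f g1) (wick h f g2)"
proof
  fix r
  let ?G = "{p. g1 p \<noteq> 0} \<union> {p. g2 p \<noteq> 0}" and ?F = "{p. f p \<noteq> 0}"
  have G: "finite ?G" using assms by simp
  have "wick h f (padd g1 g2) r = (\<Sum>p\<in>?F. \<Sum>q\<in>?G. f p * padd g1 g2 q * wick h (dl p) (dl q) r)"
    by (rule wick_expand) (use assms G in \<open>auto simp: padd_def\<close>)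
  also have "\<dots> = (\<Sum>p\<in>?F. \<Sum>q\<in>?G. f p * g1 q * wick h (dl p) (dl q) r) + (\<Sum>p\<in>?F. \<Sum>q\<in>?G. f p * g2 q * wick h (dl p) (dl q) r)"
    by (simp add: padd_def distrib_right distrib_left sum.distrib)
  also have "\<dots> = wick h f g1 r + wick h f g2 r"
    by (subst (1 2) wick_expand[where F = ?F and G = ?G]) (use assms G in auto)
  finally show "wick h f (padd g1 g2) r = padd (wick h f g1) (wick h f g2) r" by (simp add: padd_def)
qed

lemma wick_psmult_left:
  assumes "fs f" "fs g"
  shows "wick h (psmult c f) g = psmult c (wick h f g)"
proof
  fix r
  let ?F = "{p. f p \<noteq> 0}" and ?G = "{p. g p \<noteq> 0}"
  have "wick h (psmult c f) g r = (\<Sum>p\<in>?F. \<Sum>q\<in>?G. psmult c f p * g q * wick h (dl p) (dl q) r)"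
    by (rule wick_expand) (use assms in \<open>auto simp: psmult_def\<close>)
  also have "\<dots> = c * (\<Sum>p\<in>?F. \<Sum>q\<in>?G. f p * g q * wick h (dl p) (dl q) r)"
    by (simp add: psmult_def sum_distrib_left mult_ac)
  also have "\<dots> = c * wick h f g r"
    by (subst wick_expand[where F = ?F and G = ?G]) (use assms in auto)
  finally show "wick h (psmult c f) g r = psmult c (wick h f g) r" by (simp add: psmult_def)
qed

lemma wick_psmult_right:
  assumes "fs f" "fs g"
  shows "wick h f (psmult c g) = psmult c (wick h f g)"
proof
  fix r
  let ?F = "{p. f p \<noteq> 0}" and ?G = "{p. g p \<noteq> 0}"
  have "wick h f (psmult c g) r = (\<Sum>p\<in>?F. \<Sum>q\<in>?G. f p * psmult c g q * wick h (dl p) (dl q) r)"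
    by (rule wick_expand) (use assms in \<open>auto simp: psmult_def\<close>)
  also have "\<dots> = c * (\<Sum>p\<in>?F. \<Sum>q\<in>?G. f p * g q * wick h (dl p) (dl q) r)"
    by (simp add: psmult_def sum_distrib_left mult_ac)
  also have "\<dots> = c * wick h f g r"
    by (subst wick_expand[where F = ?F and G = ?G]) (use assms in auto)
  finally show "wick h f (psmult c g) r = psmult c (wick h f g) r" by (simp add: psmult_def)
qed


lemma wick_dl_swap:
  fixes A B C D P Q :: "'i::finite mi"
  shows "wick h (dl (D, C)) (dl (B, A)) (P, Q) = cnj (wick h (dl (A, B)) (dl (C, D)) (Q, P))"
proof -
  have wcs: "wc h C B K = wc h B C K" for K by (simp add: wc_def)
  have "wick h (dl (D, C)) (dl (B, A)) (P, Q) = (\<Sum>K\<in>{K. K \<le> C}. if K \<le> B then of_real (wc h B C K) * (if P = D + (B - K) \<and> Q = (C - K) + A then 1 else 0) else 0)"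
    unfolding wick_dl wcs by (intro sum.cong refl) auto
  also have "\<dots> = (\<Sum>K\<in>{K. K \<le> B \<and> K \<le> C}. of_real (wc h B C K) * (if P = D + (B - K) \<and> Q = (C - K) + A then 1 else 0))"
    by (subst sum.inter_filter[symmetric]) (auto simp: finite_box intro!: sum.cong)
  also have "\<dots> = (\<Sum>K\<in>{K. K \<le> B}. if K \<le> C then of_real (wc h B C K) * (if Q = A + (C - K) \<and> P = (B - K) + D then 1 else 0) else 0)"
    by (subst sum.inter_filter[symmetric]) (auto simp: finite_box add.commute intro!: sum.cong)
  also have "\<dots> = cnj (wick h (dl (A, B)) (dl (C, D)) (Q, P))"
    unfolding wick_dl cnj_sum by (intro sum.cong refl) auto
  finally show ?thesis .
qed

lemma pstar_wick:
  assumes f: "fs f" and g: "fs g"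
  shows "pstar (wick h f g) = wick h (pstar g) (pstar f)"
proof (rule ext, clarify)
  fix P Q :: "'a mi"
  let ?F = "{p. f p \<noteq> 0}" and ?G = "{p. g p \<noteq> 0}"
  have "pstar (wick h f g) (P, Q) = cnj (wick h f g (Q, P))" by (simp add: pstar_def)
  also have "\<dots> = (\<Sum>p\<in>?F. \<Sum>q\<in>?G. cnj (f p) * cnj (g q) * cnj (wick h (dl p) (dl q) (Q, P)))"
    by (subst wick_expand[where F = ?F and G = ?G]) (use f g in \<open>auto simp: cnj_sum\<close>)
  also have "\<dots> = (\<Sum>q\<in>?G. \<Sum>p\<in>?F. cnj (g q) * cnj (f p) * wick h (dl (prod.swap q)) (dl (prod.swap p)) (P, Q))"
    by (subst sum.swap) (auto intro!: sum.cong simp: wick_dl_swap[symmetric] mult_ac)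
  also have "\<dots> = (\<Sum>q\<in>prod.swap ` ?G. \<Sum>p\<in>prod.swap ` ?F. pstar g q * pstar f p * wick h (dl q) (dl p) (P, Q))"
    by (simp add: sum.reindex pstar_def case_prod_beta)
  also have "\<dots> = wick h (pstar g) (pstar f) (P, Q)"
    by (rule wick_expand[symmetric]) (use f g in \<open>auto simp: pstar_def image_iff\<close>)
  finally show "pstar (wick h f g) (P, Q) = wick h (pstar g) (pstar f) (P, Q)" .
qed

lemma hermitian_sq: "fs a \<Longrightarrow> hermitian (wick h (pstar a) a)"
  unfolding hermitian_def by (simp add: pstar_wick fs_pstar pstar_pstar)

lemma piop_padd: assumes "fs f" "fs g" shows "piop h (padd f g) u P = piop h f u P + piop h g u P"
proof -
  let ?F = "{p. f p \<noteq> 0} \<union> {p. g p \<noteq> 0}"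
  have "piop h (padd f g) u P = (\<Sum>p\<in>?F. padd f g p * pm h (fst p) (snd p) u P)"
    by (rule piop_superset) (use assms in \<open>auto simp: padd_def\<close>)
  also have "\<dots> = (\<Sum>p\<in>?F. f p * pm h (fst p) (snd p) u P) + (\<Sum>p\<in>?F. g p * pm h (fst p) (snd p) u P)"
    by (simp add: padd_def distrib_right sum.distrib)
  also have "\<dots> = piop h f u P + piop h g u P"
    by (subst (1 2) piop_superset[where F = ?F]) (use assms in auto)
  finally show ?thesis .
qed

lemma piop_psmult: assumes "fs f" shows "piop h (psmult c f) u P = c * piop h f u P"
proof -
  let ?F = "{p. f p \<noteq> 0}"
  have "piop h (psmult c f) u P = (\<Sum>p\<in>?F. psmult c f p * pm h (fst p) (snd p) u P)"
    by (rule piop_superset) (use assms in \<open>auto simp: psmult_def\<close>)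
  also have "\<dots> = c * piop h f u P"
    by (subst piop_superset[where F = ?F]) (use assms in \<open>auto simp: psmult_def sum_distrib_left mult_ac\<close>)
  finally show ?thesis .
qed

lemma piop_zero: "piop h (\<lambda>_. 0) u P = 0" by (simp add: piop_def)

lemma pm_uadd: "pm h K L (\<lambda>R. u R + v R) P = pm h K L u P + pm h K L v P"
  by (simp add: pm_alt distrib_left)
lemma pm_usmult: "pm h K L (\<lambda>R. c * u R) P = c * pm h K L u P"
  by (simp add: pm_alt mult_ac)

lemma piop_uadd: "piop h f (\<lambda>R. u R + v R) P = piop h f u P + piop h f v P"
  by (simp add: piop_alt pm_uadd distrib_left sum.distrib)
lemma piop_usmult: "piop h f (\<lambda>R. c * u R) P = c * piop h f u P"
  by (simp add: piop_alt pm_usmult sum_distrib_left mult_ac)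

lemma sp_pm: "{P. pm h K L u P \<noteq> 0} \<subseteq> (\<lambda>Q. K + (Q - L)) ` {Q. u Q \<noteq> 0}"
proof
  fix P assume "P \<in> {P. pm h K L u P \<noteq> 0}"
  hence KP: "K \<le> P" and nz: "u (P - K + L) \<noteq> 0" by (auto simp: pm_alt split: if_splits)
  have "P = K + ((P - K + L) - L)" using KP by (auto simp: fun_eq_iff le_fun_def)
  thus "P \<in> (\<lambda>Q. K + (Q - L)) ` {Q. u Q \<noteq> 0}" using nz by blast
qed

lemma Fock_pm: "u \<in> Fock \<Longrightarrow> pm h K L u \<in> Fock"
  unfolding Fock_def by (auto intro: finite_subset[OF sp_pm])

lemma Fock_piop: assumes u: "u \<in> Fock" and f: "fs f" shows "piop h f u \<in> Fock"
proof -
  have "{P. piop h f u P \<noteq> 0} \<subseteq> (\<Union>p\<in>{p. f p \<noteq> 0}. {P. pm h (fst p) (snd p) u P \<noteq> 0})"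
  proof
    fix P assume "P \<in> {P. piop h f u P \<noteq> 0}"
    hence "piop h f u P \<noteq> 0" by simp
    then obtain p where "p \<in> {p. f p \<noteq> 0}" "f p * pm h (fst p) (snd p) u P \<noteq> 0"
      unfolding piop_alt by (rule sum.not_neutral_contains_not_neutral)
    thus "P \<in> (\<Union>p\<in>{p. f p \<noteq> 0}. {P. pm h (fst p) (snd p) u P \<noteq> 0})" by (intro UN_I) auto
  qed
  moreover have "finite (\<Union>p\<in>{p. f p \<noteq> 0}. {P. pm h (fst p) (snd p) u P \<noteq> 0})"
    using f Fock_pm[OF u] by (auto simp: Fock_def)
  ultimately show ?thesis unfolding Fock_def by (auto intro: finite_subset)
qed

definition wt :: "real \<Rightarrow> 'i::finite mi \<Rightarrow> real" where
  "wt h K = h ^ mabs K * real (mfact K)"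

definition ip :: "real \<Rightarrow> 'i::finite mi set \<Rightarrow> 'i fock \<Rightarrow> 'i fock \<Rightarrow> complex" where
  "ip h S u v = (\<Sum>K\<in>S. cnj (u K) * v K * of_real (wt h K))"

lemma finner_ip:
  assumes u: "u \<in> Fock" and S: "finite S" "{K. u K \<noteq> 0} \<inter> {K. v K \<noteq> 0} \<subseteq> S"
  shows "finner h u v = ip h S u v"
proof -
  have fu: "finite {K. u K \<noteq> 0}" using u by (simp add: Fock_def)
  have "finner h u v = (\<Sum>K\<in>{K. u K \<noteq> 0} \<inter> {K. v K \<noteq> 0}. cnj (u K) * v K * of_real (wt h K))"
    unfolding finner_def wt_def using fu by (intro sum.mono_neutral_right) auto
  also have "\<dots> = ip h S u v"
    unfolding ip_def using S by (intro sum.mono_neutral_left) auto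
  finally show ?thesis .
qed

lemma ip_sum_right: "ip h S u (\<lambda>K. \<Sum>p\<in>F. c p * v p K) = (\<Sum>p\<in>F. c p * ip h S u (v p))"
proof -
  have "ip h S u (\<lambda>K. \<Sum>p\<in>F. c p * v p K) = (\<Sum>K\<in>S. \<Sum>p\<in>F. c p * (cnj (u K) * v p K * of_real (wt h K)))"
    unfolding ip_def by (simp add: sum_distrib_left sum_distrib_right mult_ac)
  also have "\<dots> = (\<Sum>p\<in>F. \<Sum>K\<in>S. c p * (cnj (u K) * v p K * of_real (wt h K)))" by (rule sum.swap)
  finally show ?thesis by (simp add: ip_def sum_distrib_left)
qed
lemma ip_sum_left: "ip h S (\<lambda>K. \<Sum>p\<in>F. c p * v p K) u = (\<Sum>p\<in>F. cnj (c p) * ip h S (v p) u)"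
proof -
  have "ip h S (\<lambda>K. \<Sum>p\<in>F. c p * v p K) u = (\<Sum>K\<in>S. \<Sum>p\<in>F. cnj (c p) * (cnj (v p K) * u K * of_real (wt h K)))"
    unfolding ip_def by (simp add: cnj_sum sum_distrib_left sum_distrib_right mult_ac)
  also have "\<dots> = (\<Sum>p\<in>F. \<Sum>K\<in>S. cnj (c p) * (cnj (v p K) * u K * of_real (wt h K)))" by (rule sum.swap)
  finally show ?thesis by (simp add: ip_def sum_distrib_left)
qed

lemma wt_pos: "0 < h \<Longrightarrow> 0 < wt h K"
  by (auto simp: wt_def mfact_def intro!: mult_pos_pos prod_pos)

lemma pm_adj:
  assumes u: "u \<in> Fock" and v: "v \<in> Fock"
  shows "finner h u (pm h K L v) = finner h (pm h L K u) v"
proof -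
  define R0 where "R0 = {R. u (R + K) \<noteq> 0}"
  have fu: "finite {K. u K \<noteq> 0}" using u by (simp add: Fock_def)
  have injK: "inj (\<lambda>R. R + K)" and injL: "inj (\<lambda>R. R + L)" by (auto intro: injI)
  have fR0: "finite R0" unfolding R0_def
    using finite_vimageI[OF fu injK] by (simp add: vimage_def)
  have sub1: "{P. u P \<noteq> 0} \<inter> {P. pm h K L v P \<noteq> 0} \<subseteq> (\<lambda>R. R + K) ` R0"
  proof
    fix P assume P: "P \<in> {P. u P \<noteq> 0} \<inter> {P. pm h K L v P \<noteq> 0}"
    hence KP: "K \<le> P" by (auto simp: pm_alt split: if_splits)
    hence "P = (P - K) + K" by (auto simp: fun_eq_iff le_fun_def)
    thus "P \<in> (\<lambda>R. R + K) ` R0" using P unfolding R0_def by (metis (mono_tags) IntD1 image_eqI mem_Collect_eq)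
  qed
  have sub2: "{P. pm h L K u P \<noteq> 0} \<inter> {P. v P \<noteq> 0} \<subseteq> (\<lambda>R. R + L) ` R0"
  proof
    fix P assume P: "P \<in> {P. pm h L K u P \<noteq> 0} \<inter> {P. v P \<noteq> 0}"
    hence LP: "L \<le> P" and nz: "u (P - L + K) \<noteq> 0" by (auto simp: pm_alt split: if_splits)
    hence "P = (P - L) + L" by (auto simp: fun_eq_iff le_fun_def)
    thus "P \<in> (\<lambda>R. R + L) ` R0" using nz unfolding R0_def by (metis (mono_tags) image_eqI mem_Collect_eq)
  qed
  have "finner h u (pm h K L v) = ip h ((\<lambda>R. R + K) ` R0) u (pm h K L v)"
    by (rule finner_ip[OF u]) (use fR0 sub1 in auto)
  also have "\<dots> = (\<Sum>R\<in>R0. cnj (u (R + K)) * pm h K L v (R + K) * of_real (wt h (R + K)))"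
    unfolding ip_def by (subst sum.reindex) (use injK in \<open>auto simp: inj_on_def\<close>)
  also have "\<dots> = (\<Sum>R\<in>R0. cnj (pm h L K u (R + L)) * v (R + L) * of_real (wt h (R + L)))"
  proof (rule sum.cong[OF refl])
    fix R
    have e1: "R + K - K = R" "R + L - L = R" by (auto simp: fun_eq_iff)
    have le: "K \<le> R + K" "L \<le> R + L" by (auto simp: le_fun_def)
    have "h ^ mabs L * (\<Prod>i\<in>UNIV. fact (R i + L i) / fact (R i)) * wt h (R + K)
        = h ^ mabs K * (\<Prod>i\<in>UNIV. fact (R i + K i) / fact (R i)) * wt h (R + L)"
      by (simp add: wt_def mabs_add mfact_def power_add prod_dividef field_simps)
    hence "of_real (h ^ mabs L * (\<Prod>i\<in>UNIV. fact (R i + L i) / fact (R i))) * of_real (wt h (R + K))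
        = (of_real (h ^ mabs K * (\<Prod>i\<in>UNIV. fact (R i + K i) / fact (R i))) * of_real (wt h (R + L)) :: complex)"
      by (simp only: of_real_mult[symmetric])
    thus "cnj (u (R + K)) * pm h K L v (R + K) * of_real (wt h (R + K))
        = cnj (pm h L K u (R + L)) * v (R + L) * of_real (wt h (R + L))"
      unfolding pm_alt e1 using le by (simp add: mult_ac del: of_real_prod of_real_mult)
  qed
  also have "\<dots> = ip h ((\<lambda>R. R + L) ` R0) (pm h L K u) v"
    unfolding ip_def by (subst sum.reindex) (use injL in \<open>auto simp: inj_on_def\<close>)
  also have "\<dots> = finner h (pm h L K u) v"
    by (rule finner_ip[symmetric, OF Fock_pm[OF u]]) (use fR0 sub2 in auto)
  finally show ?thesis .
qed


lemma piop_fun: "piop h f u = (\<lambda>K. \<Sum>p\<in>{p. f p \<noteq> 0}. f p * pm h (fst p) (snd p) u K)"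
  by (rule ext) (rule piop_alt)

lemma piop_pstar_fun:
  assumes f: "fs f"
  shows "piop h (pstar f) u = (\<lambda>K. \<Sum>p\<in>{p. f p \<noteq> 0}. cnj (f p) * pm h (snd p) (fst p) u K)"
proof
  fix K
  have "piop h (pstar f) u K = (\<Sum>p\<in>prod.swap ` {p. f p \<noteq> 0}. pstar f p * pm h (fst p) (snd p) u K)"
    by (rule piop_superset) (use f in \<open>auto simp: pstar_def image_iff\<close>)
  also have "\<dots> = (\<Sum>p\<in>{p. f p \<noteq> 0}. cnj (f p) * pm h (snd p) (fst p) u K)"
    by (simp add: sum.reindex pstar_def case_prod_beta)
  finally show "piop h (pstar f) u K = (\<Sum>p\<in>{p. f p \<noteq> 0}. cnj (f p) * pm h (snd p) (fst p) u K)" .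
qed

lemma piop_adj:
  assumes u: "u \<in> Fock" and v: "v \<in> Fock" and f: "fs f"
  shows "finner h u (piop h f v) = finner h (piop h (pstar f) u) v"
proof -
  let ?F = "{p. f p \<noteq> 0}"
  define S where "S = {K. u K \<noteq> 0} \<union> {K. v K \<noteq> 0} \<union>
     (\<Union>p\<in>?F. {K. pm h (fst p) (snd p) v K \<noteq> 0} \<union> {K. pm h (snd p) (fst p) u K \<noteq> 0})"
  have fS: "finite S" unfolding S_def using u v f Fock_pm[OF u] Fock_pm[OF v] by (auto simp: Fock_def)
  have "finner h u (piop h f v) = ip h S u (piop h f v)"
    by (rule finner_ip[OF u fS]) (auto simp: S_def)
  also have "\<dots> = (\<Sum>p\<in>?F. f p * ip h S u (pm h (fst p) (snd p) v))"
    unfolding piop_fun by (rule ip_sum_right)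
  also have "\<dots> = (\<Sum>p\<in>?F. f p * ip h S (pm h (snd p) (fst p) u) v)"
  proof (rule sum.cong[OF refl])
    fix p assume p: "p \<in> ?F"
    have "ip h S u (pm h (fst p) (snd p) v) = finner h u (pm h (fst p) (snd p) v)"
      by (rule finner_ip[symmetric, OF u fS]) (auto simp: S_def)
    also have "\<dots> = finner h (pm h (snd p) (fst p) u) v" by (rule pm_adj[OF u v])
    also have "\<dots> = ip h S (pm h (snd p) (fst p) u) v"
      by (rule finner_ip[OF Fock_pm[OF u] fS]) (use p in \<open>auto simp: S_def\<close>)
    finally show "f p * ip h S u (pm h (fst p) (snd p) v) = f p * ip h S (pm h (snd p) (fst p) u) v" by simp
  qed
  also have "\<dots> = ip h S (piop h (pstar f) u) v"
    unfolding piop_pstar_fun[OF f] by (simp add: ip_sum_left)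
  also have "\<dots> = finner h (piop h (pstar f) u) v"
    by (rule finner_ip[symmetric, OF Fock_piop[OF u fs_pstar[OF f]] fS]) (auto simp: S_def)
  finally show ?thesis .
qed

lemma finner_nonneg: "0 < h \<Longrightarrow> 0 \<le> finner h w w"
proof -
  assume h: "0 < h"
  have cz: "cnj z * z = of_real ((cmod z)\<^sup>2)" for z :: complex
    by (metis complex_norm_square mult.commute of_real_power)
  have "finner h w w = (\<Sum>K\<in>{K. w K \<noteq> 0}. of_real ((cmod (w K))\<^sup>2 * wt h K))"
    unfolding finner_def wt_def by (intro sum.cong refl) (simp add: cz)
  also have "\<dots> = of_real (\<Sum>K\<in>{K. w K \<noteq> 0}. (cmod (w K))\<^sup>2 * wt h K)" by simp
  also have "0 \<le> \<dots>"
  proof -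
    have "0 \<le> (\<Sum>K\<in>{K. w K \<noteq> 0}. (cmod (w K))\<^sup>2 * wt h K)"
      by (intro sum_nonneg mult_nonneg_nonneg) (simp_all add: less_imp_le[OF wt_pos[OF h]])
    thus ?thesis by (simp only: less_eq_complex_def) simp
  qed
  finally show ?thesis by simp
qed

lemma finner_add_right: "finner h u (\<lambda>K. v K + w K) = finner h u v + finner h u w"
  by (simp add: finner_def distrib_left distrib_right sum.distrib)
lemma finner_smult_right: "finner h u (\<lambda>K. c * v K) = c * finner h u v"
  by (simp add: finner_def sum_distrib_left mult_ac)
lemma finner_zero_right: "finner h u (\<lambda>K. 0) = 0"
  by (simp add: finner_def)

lemma sq_pos:
  assumes h: "0 < h" and a: "fs a" and u: "u \<in> Fock"
  shows "0 \<le> finner h u (piop h (wick h (pstar a) a) u)"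
proof -
  have "piop h (wick h (pstar a) a) u = piop h (pstar a) (piop h a u)"
    by (rule ext) (rule piop_wick[OF fs_pstar[OF a] a])
  hence "finner h u (piop h (wick h (pstar a) a) u) = finner h (piop h a u) (piop h a u)"
    using piop_adj[OF u Fock_piop[OF u a] fs_pstar[OF a], of h] by (simp add: pstar_pstar)
  thus ?thesis using finner_nonneg[OF h] by simp
qed

lemma sq_Bplus:
  assumes h: "0 < h" and a: "a \<in> Bset"
  shows "wick h (pstar a) a \<in> Bplus h"
  unfolding Bplus_def
  using Bset_wick[OF Bset_pstar[OF a] a] hermitian_sq sq_pos[OF h] a by (auto simp: Bset_iff)

lemma pstar_padd: "pstar (padd f g) = padd (pstar f) (pstar g)"
  by (auto simp: pstar_def padd_def fun_eq_iff)

lemma Bplus_padd: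
  assumes f: "f \<in> Bplus h" and g: "g \<in> Bplus h"
  shows "padd f g \<in> Bplus h"
proof -
  have B: "f \<in> Bset" "g \<in> Bset" using f g by (auto simp: Bplus_def)
  have "hermitian (padd f g)" using f g by (auto simp: Bplus_def hermitian_def pstar_padd)
  moreover have "0 \<le> finner h u (piop h (padd f g) u)" if u: "u \<in> Fock" for u
  proof -
    have "piop h (padd f g) u = (\<lambda>K. piop h f u K + piop h g u K)"
      using B by (auto simp: piop_padd Bset_iff)
    hence "finner h u (piop h (padd f g) u) = finner h u (piop h f u) + finner h u (piop h g u)"
      by (simp add: finner_add_right)
    moreover have "0 \<le> finner h u (piop h f u)" "0 \<le> finner h u (piop h g u)"
      using f g u by (auto simp: Bplus_def)
    ultimately show ?thesis by simp
  qed
  ultimately show ?thesis using Bset_padd[OF B] by (simp add: Bplus_def)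
qed

lemma zero_Bplus: "(\<lambda>_. 0) \<in> Bplus h"
  unfolding Bplus_def
  by (simp add: Bset_zero hermitian_def pstar_def piop_def finner_def fun_eq_iff case_prod_beta)

lemma Bpp_Bplus:
  assumes h: "0 < h" and f: "f \<in> Bpp h"
  shows "f \<in> Bplus h"
proof -
  from f obtain as where as: "set as \<subseteq> Bset" "f = foldr (\<lambda>a s. padd (wick h (pstar a) a) s) as (\<lambda>_. 0)"
    by (auto simp: Bpp_def)
  have "set as \<subseteq> Bset \<Longrightarrow> foldr (\<lambda>a s. padd (wick h (pstar a) a) s) as (\<lambda>_. 0) \<in> Bplus h"
    by (induction as) (auto simp: zero_Bplus intro!: Bplus_padd sq_Bplus[OF h])
  thus ?thesis using as by simp
qed


lemma faithful:
  fixes f :: "'i::finite pol"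
  assumes h: "0 < h" and f: "fs f" and z: "\<And>u P. u \<in> Fock \<Longrightarrow> piop h f u P = 0"
  shows "f = (\<lambda>_. 0)"
proof (rule ccontr)
  assume "f \<noteq> (\<lambda>_. 0)"
  then obtain p0 where "f p0 \<noteq> 0" by (metis ext)
  define S2 where "S2 = snd ` {p. f p \<noteq> 0}"
  have fS2: "finite S2" "S2 \<noteq> {}" using f \<open>f p0 \<noteq> 0\<close> unfolding S2_def by blast+
  obtain L where L: "L \<in> S2" "\<And>L'. L' \<in> S2 \<Longrightarrow> mabs L \<le> mabs L'"
    using ex_min_if_finite[OF fS2] by (metis (no_types, lifting) arg_min_if_finite(1) arg_min_if_finite(2) fS2 not_le)
  then obtain K where K: "f (K, L) \<noteq> 0" by (auto simp: S2_def)
  define u :: "'i fock" where "u = (\<lambda>Q. if Q = L then 1 else 0)"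
  have u: "u \<in> Fock" by (simp add: u_def Fock_def)
  have "piop h f u K = (\<Sum>p\<in>{p. f p \<noteq> 0}. if p = (K, L) then f (K, L) * pm h K L u K else 0)"
    unfolding piop_alt
  proof (intro sum.cong refl)
    fix p assume p: "p \<in> {p. f p \<noteq> 0}"
    obtain K' L' where pKL: "p = (K', L')" by (cases p)
    show "f p * pm h (fst p) (snd p) u K = (if p = (K, L) then f (K, L) * pm h K L u K else 0)"
    proof (cases "p = (K, L)")
      case False
      have "pm h K' L' u K = 0"
      proof (rule ccontr)
        assume "pm h K' L' u K \<noteq> 0"
        hence KK: "K' \<le> K" and e: "K - K' + L' = L" by (auto simp: pm_alt u_def split: if_splits)
        have "L' \<le> L" unfolding le_fun_def
        proof
          fix i have "(K - K' + L') i = L i" using e by simp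
          thus "L' i \<le> L i" by simp
        qed
        moreover have "L' \<in> S2" using p pKL by (force simp: S2_def)
        ultimately have "mabs L' = mabs L" using L(2)[of L'] mabs_sub[of L' L] by simp
        hence "L' = L" using \<open>L' \<le> L\<close> mabs_sub[of L' L]
        proof -
          have "mabs (L - L') = 0" using mabs_sub[OF \<open>L' \<le> L\<close>] \<open>mabs L' = mabs L\<close> by simp
          hence "L - L' = 0" by (simp add: mabs_def fun_eq_iff)
          thus ?thesis using \<open>L' \<le> L\<close> by (auto simp: fun_eq_iff le_fun_def) (metis diff_is_0_eq le_antisym)
        qed
        hence "K - K' = 0" using e by (auto simp: fun_eq_iff)
        hence "K' = K" using KK by (auto simp: fun_eq_iff le_fun_def) (metis diff_is_0_eq le_antisym)
        thus False using False pKL \<open>L' = L\<close> by simp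
      qed
      thus ?thesis using False pKL by auto
    qed simp
  qed
  also have "\<dots> = f (K, L) * pm h K L u K" using f K by (simp add: sum.delta')
  also have "pm h K L u K = of_real (h ^ mabs L * (\<Prod>i\<in>UNIV. fact (L i)))"
    by (simp add: pm_alt u_def fun_eq_iff)
  finally have "piop h f u K = f (K, L) * of_real (h ^ mabs L * (\<Prod>i\<in>UNIV. fact (L i)))" .
  moreover have "h ^ mabs L * (\<Prod>i\<in>UNIV. fact (L i)) \<noteq> (0::real)" using h by simp
  ultimately have "piop h f u K \<noteq> 0" using K by simp
  thus False using z[OF u] by simp
qed

lemma faithful_eq:
  fixes f g :: "'i::finite pol"
  assumes h: "0 < h" and f: "fs f" and g: "fs g" and z: "\<And>u P. u \<in> Fock \<Longrightarrow> piop h f u P = piop h g u P"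
  shows "f = g"
proof -
  have "padd f (pneg g) = (\<lambda>_. 0)"
  proof (rule faithful[OF h fs_padd[OF f fs_pneg[OF g]]])
    fix u :: "'i fock" and P assume "u \<in> Fock"
    have "pneg g = psmult (-1) g" by (simp add: pneg_def psmult_def)
    thus "piop h (padd f (pneg g)) u P = 0"
      using z[OF \<open>u \<in> Fock\<close>] by (simp add: piop_padd[OF f fs_psmult[OF g]] piop_psmult[OF g])
  qed
  thus ?thesis by (auto simp: padd_def pneg_def fun_eq_iff)
qed

lemma wick_assoc:
  fixes f g k :: "'i::finite pol"
  assumes h: "0 < h" and f: "fs f" and g: "fs g" and k: "fs k"
  shows "wick h (wick h f g) k = wick h f (wick h g k)"
proof (rule faithful_eq[OF h])
  show "fs (wick h (wick h f g) k)" "fs (wick h f (wick h g k))" using f g k by (simp_all add: fs_wick)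
  fix u :: "'i fock" and P
  have "piop h (wick h (wick h f g) k) u P = piop h f (piop h g (piop h k u)) P"
    using f g k by (simp add: piop_wick fs_wick)
  moreover have "piop h (wick h g k) u = piop h g (piop h k u)"
    using g k by (simp add: piop_wick fun_eq_iff)
  ultimately show "piop h (wick h (wick h f g) k) u P = piop h (wick h f (wick h g k)) u P"
    using f g k by (simp add: piop_wick fs_wick)
qed

definition ej :: "'i::finite \<Rightarrow> 'i mi" where "ej j = (\<lambda>i. if i = j then 1 else 0)"

lemma inj_ej: "inj ej"
proof (rule injI)
  fix a b :: "'i::finite" assume "ej a = ej b"
  hence "ej a a = ej b a" by simp
  thus "a = b" by (simp add: ej_def split: if_splits)
qed

lemma mabs_ej: "mabs (ej j) = 1"
  by (simp add: mabs_def ej_def)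

lemma sp_Jpol: "{p. (Jpol :: 'i::finite pol) p \<noteq> 0} = (\<lambda>j. (ej j, ej j)) ` UNIV"
  by (auto simp: Jpol_def ej_def split: if_splits)

lemma Jpol_at: "Jpol (ej j, ej j) = 1"
  by (auto simp: Jpol_def ej_def)

lemma Bset_Jpol: "Jpol \<in> Bset"
proof -
  have "fs (Jpol :: 'i::finite pol)" by (simp only: sp_Jpol) simp
  moreover have "bideg (Jpol :: 'i::finite pol)" by (auto simp: bideg_def Jpol_def)
  ultimately show ?thesis by (simp add: Bset_iff)
qed

lemma sp_pone: "{p. (pone :: 'i::finite pol) p \<noteq> 0} = {(0, 0)}"
  by (auto simp: pone_def zero_fun_def split: if_splits)

lemma Bset_pone: "pone \<in> Bset"
proof -
  have "fs (pone :: 'i::finite pol)" by (simp only: sp_pone) simp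
  moreover have "bideg (pone :: 'i::finite pol)" by (auto simp: bideg_def pone_def split: if_splits)
  ultimately show ?thesis by (simp add: Bset_iff)
qed

lemma herm_Jpol: "hermitian Jpol"
  by (auto simp: hermitian_def pstar_def Jpol_def fun_eq_iff)
lemma herm_pone: "hermitian pone"
  by (auto simp: hermitian_def pstar_def pone_def fun_eq_iff)

lemma pstar_psmult: "pstar (psmult c f) = psmult (cnj c) (pstar f)"
  by (auto simp: pstar_def psmult_def fun_eq_iff)

lemma piop_pone: "piop h pone u P = u P"
proof -
  have "piop h pone u P = pm h 0 0 u P"
    by (simp add: piop_alt sp_pone) (simp add: pone_def zero_fun_def)
  also have "\<dots> = u P" by (simp add: pm_alt mabs_def)
  finally show ?thesis .
qed

lemma pm_ej: "pm h (ej j) (ej j) u P = of_real (h * real (P j)) * u P"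
proof (cases "ej j \<le> P")
  case True
  have e: "P - ej j + ej j = P" using True by (auto simp: fun_eq_iff le_fun_def ej_def)
  have "(\<Prod>i\<in>UNIV. fact ((P - ej j) i + ej j i) / fact ((P - ej j) i)) = (\<Prod>i\<in>UNIV. if i = j then real (P j) else 1)"
  proof (rule prod.cong[OF refl])
    fix i show "fact ((P - ej j) i + ej j i) / fact ((P - ej j) i) = (if i = j then real (P j) else (1::real))"
    proof (cases "i = j")
      case True
      hence "P i \<ge> 1" using \<open>ej j \<le> P\<close> by (auto simp: le_fun_def ej_def dest: spec[of _ j])
      then obtain m where "P i = Suc m" by (cases "P i") auto
      thus ?thesis using True by (simp add: ej_def)
    qed (simp add: ej_def)
  qed
  also have "\<dots> = real (P j)" by simp
  finally show ?thesis using True by (simp add: pm_alt e mabs_ej)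
next
  case False
  hence "P j = 0" by (auto simp: le_fun_def ej_def split: if_splits)
  thus ?thesis using False by (simp add: pm_alt)
qed

lemma piop_Jpol: "piop h Jpol u P = of_real (h * real (mabs P)) * u P"
proof -
  have "piop h Jpol u P = (\<Sum>p\<in>(\<lambda>j. (ej j, ej j)) ` UNIV. Jpol p * pm h (fst p) (snd p) u P)"
    by (simp add: piop_alt sp_Jpol)
  also have "\<dots> = (\<Sum>j\<in>UNIV. pm h (ej j) (ej j) u P)"
    by (subst sum.reindex) (auto simp: inj_on_def inj_ej[THEN injD] Jpol_at)
  also have "\<dots> = (\<Sum>j\<in>UNIV. of_real (h * real (P j)) * u P)" by (simp add: pm_ej)
  also have "\<dots> = of_real (h * real (mabs P)) * u P"
    by (simp add: mabs_def sum_distrib_left sum_distrib_right)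
  finally show ?thesis .
qed

definition cJ :: "real \<Rightarrow> 'i::finite pol" where
  "cJ \<mu> = padd Jpol (psmult (- of_real \<mu>) pone)"

lemma Bset_cJ: "cJ \<mu> \<in> Bset"
  by (simp add: cJ_def Bset_padd Bset_psmult Bset_Jpol Bset_pone)
lemma fs_cJ: "fs (cJ \<mu>)" using Bset_cJ[of \<mu>] unfolding Bset_iff by blast
lemma herm_cJ: "hermitian (cJ \<mu>)"
proof -
  have a: "pstar Jpol = Jpol" "pstar pone = pone" using herm_Jpol herm_pone by (simp_all add: hermitian_def)
  show ?thesis unfolding hermitian_def cJ_def pstar_padd pstar_psmult a by simp
qed

lemma piop_cJ: "piop h (cJ \<mu>) u P = of_real (h * real (mabs P) - \<mu>) * u P"
proof -
  have fJ: "fs (Jpol :: 'a pol)" using Bset_Jpol unfolding Bset_iff by blast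
  have fo: "fs (pone :: 'a pol)" using Bset_pone unfolding Bset_iff by blast
  show ?thesis unfolding cJ_def
    by (simp add: piop_padd[OF fJ fs_psmult[OF fo]] piop_psmult[OF fo] piop_Jpol piop_pone algebra_simps)
qed

fun cp :: "real \<Rightarrow> real \<Rightarrow> nat \<Rightarrow> 'i::finite pol" where
  "cp h \<mu> 0 = cJ \<mu>"
| "cp h \<mu> (Suc n) = wick h (cp h \<mu> n) (cJ \<mu>)"

lemma Bset_cp: "cp h \<mu> n \<in> Bset"
  by (induction n) (simp_all add: Bset_cJ Bset_wick)
lemma fs_cp: "fs (cp h \<mu> n)" using Bset_cp[of h \<mu> n] unfolding Bset_iff by blast

lemma cp_comm: assumes h: "0 < h" shows "wick h (cJ \<mu>) (cp h \<mu> n) = wick h (cp h \<mu> n) (cJ \<mu> :: 'i::finite pol)"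
proof (induction n)
  case (Suc n)
  have "wick h (cJ \<mu>) (cp h \<mu> (Suc n)) = wick h (wick h (cJ \<mu>) (cp h \<mu> n)) (cJ \<mu> :: 'i pol)"
    by (simp add: wick_assoc[OF h fs_cJ fs_cp fs_cJ])
  also have "\<dots> = wick h (cp h \<mu> (Suc n)) (cJ \<mu>)" unfolding cp.simps by (rule arg_cong[where f = "\<lambda>x. wick h x (cJ \<mu>)"], rule Suc.IH)
  finally show ?case .
qed simp

lemma herm_cp: assumes h: "0 < h" shows "hermitian (cp h \<mu> n :: 'i::finite pol)"
proof (induction n)
  case 0 thus ?case by (simp add: herm_cJ)
next
  case (Suc n)
  have a: "pstar (cJ \<mu>) = (cJ \<mu> :: 'i pol)" using herm_cJ[of \<mu>] unfolding hermitian_def .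
  have b: "pstar (cp h \<mu> n) = (cp h \<mu> n :: 'i pol)" using Suc.IH unfolding hermitian_def .
  show ?case unfolding hermitian_def cp.simps pstar_wick[OF fs_cp fs_cJ] a b
    by (rule cp_comm[OF h])
qed

lemma piop_cp: "piop h (cp h \<mu> n) u P = of_real ((h * real (mabs P) - \<mu>) ^ Suc n) * u P"
proof (induction n arbitrary: u)
  case 0 thus ?case by (simp add: piop_cJ)
next
  case (Suc n)
  have "piop h (cp h \<mu> (Suc n)) u P = piop h (cp h \<mu> n) (piop h (cJ \<mu>) u) P"
    by (simp add: piop_wick fs_cp fs_cJ)
  also have "\<dots> = of_real ((h * real (mabs P) - \<mu>) ^ Suc n) * piop h (cJ \<mu>) u P" by (rule Suc)
  finally show ?case by (simp add: piop_cJ)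
qed


lemma quad_zero:
  fixes A x :: real
  assumes A: "0 \<le> A" and q: "\<And>s. 0 \<le> s\<^sup>2 * A + s * x"
  shows "x = 0"
proof -
  define B where "B = A + 1"
  have B: "B \<noteq> 0" "A = B - 1" using A by (auto simp: B_def)
  define s where "s = - x / B"
  have q0: "0 \<le> s\<^sup>2 * A + s * x" by (rule q)
  have "B\<^sup>2 * (s\<^sup>2 * A + s * x) = - x\<^sup>2"
    unfolding s_def B(2) using B(1) by (simp add: field_simps power2_eq_square)
  moreover have "0 \<le> B\<^sup>2 * (s\<^sup>2 * A + s * x)" using q0 by simp
  ultimately have "x\<^sup>2 \<le> 0" by simp
  thus ?thesis by simp
qed

lemma cs_alg:
  fixes A \<beta> \<gamma> :: complex
  assumes A: "0 \<le> A" and q: "\<And>t. 0 \<le> cnj t * t * A + cnj t * \<beta> + t * \<gamma>"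
  shows "\<beta> = 0"
proof -
  have AR: "Im A = 0" "0 \<le> Re A" using A by (auto simp: less_eq_complex_def)
  have r: "0 \<le> s\<^sup>2 * Re A + s * Re (\<beta> + \<gamma>)" and ri: "s * Im (\<beta> + \<gamma>) = 0" for s :: real
  proof -
    have "0 \<le> cnj (of_real s) * of_real s * A + cnj (of_real s) * \<beta> + of_real s * \<gamma>" by (rule q)
    thus "0 \<le> s\<^sup>2 * Re A + s * Re (\<beta> + \<gamma>)" "s * Im (\<beta> + \<gamma>) = 0"
      using AR by (auto simp: less_eq_complex_def power2_eq_square algebra_simps)
  qed
  have i: "0 \<le> s\<^sup>2 * Re A + s * (- Im (\<gamma> - \<beta>))" and ii: "s * Re (\<gamma> - \<beta>) = 0" for s :: real
  proof -
    have "0 \<le> cnj (\<i> * of_real s) * (\<i> * of_real s) * A + cnj (\<i> * of_real s) * \<beta> + (\<i> * of_real s) * \<gamma>" by (rule q)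
    thus "0 \<le> s\<^sup>2 * Re A + s * (- Im (\<gamma> - \<beta>))" "s * Re (\<gamma> - \<beta>) = 0"
      using AR by (auto simp: less_eq_complex_def power2_eq_square algebra_simps)
  qed
  have "Re (\<beta> + \<gamma>) = 0" by (rule quad_zero[OF AR(2) r])
  moreover have "Im (\<beta> + \<gamma>) = 0" using ri[of 1] by simp
  moreover have "- Im (\<gamma> - \<beta>) = 0" by (rule quad_zero[OF AR(2) i])
  moreover have "Re (\<gamma> - \<beta>) = 0" using ii[of 1] by simp
  ultimately show ?thesis by (simp add: complex_eq_iff)
qed

lemma Bset_fs: "f \<in> Bset \<Longrightarrow> fs f" unfolding Bset_iff by blast

lemma state_add: "is_state h \<omega> \<Longrightarrow> f \<in> Bset \<Longrightarrow> g \<in> Bset \<Longrightarrow> \<omega> (padd f g) = \<omega> f + \<omega> g"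
  by (simp add: is_state_def)
lemma state_smult: "is_state h \<omega> \<Longrightarrow> f \<in> Bset \<Longrightarrow> \<omega> (psmult c f) = c * \<omega> f"
  by (simp add: is_state_def)
lemma state_pos: "is_state h \<omega> \<Longrightarrow> f \<in> Bplus h \<Longrightarrow> 0 \<le> \<omega> f"
  by (simp add: is_state_def)

lemma state_kill:
  fixes b c :: "'i::finite pol"
  assumes h: "0 < h" and st: "is_state h \<omega>" and c: "c \<in> Bset" "hermitian c"
    and cc: "\<omega> (wick h c c) = 0" and b: "b \<in> Bset"
  shows "\<omega> (wick h b c) = 0"
proof -
  have bs: "pstar b \<in> Bset" using b by (rule Bset_pstar)
  have fb: "fs b" "fs (pstar b)" "fs c" using b bs c by (simp_all add: Bset_fs)
  have pc: "pstar c = c" using c by (simp add: hermitian_def)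
  let ?A = "\<omega> (wick h b (pstar b))" and ?\<beta> = "\<omega> (wick h b c)" and ?\<gamma> = "\<omega> (wick h c (pstar b))"
  have A: "0 \<le> ?A"
  proof -
    have "wick h (pstar (pstar b)) (pstar b) \<in> Bplus h" by (rule sq_Bplus[OF h bs])
    thus ?thesis using st by (simp add: pstar_pstar state_pos)
  qed
  have q: "0 \<le> cnj t * t * ?A + cnj t * ?\<beta> + t * ?\<gamma>" for t
  proof -
    define x where "x = padd (psmult t (pstar b)) c"
    have xB: "x \<in> Bset" unfolding x_def using bs c by (simp add: Bset_padd Bset_psmult)
    have px: "pstar x = padd (psmult (cnj t) b) c"
      unfolding x_def by (simp add: pstar_padd pstar_psmult pstar_pstar pc)
    have "wick h (pstar x) x = padd (psmult (cnj t) (padd (psmult t (wick h b (pstar b))) (wick h b c)))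
                                    (padd (psmult t (wick h c (pstar b))) (wick h c c))"
    proof -
      have fx: "fs x" using xB by (rule Bset_fs)
      have e1: "wick h (padd (psmult (cnj t) b) c) x = padd (wick h (psmult (cnj t) b) x) (wick h c x)"
        by (rule wick_padd_left[OF fs_psmult[OF fb(1)] fb(3) fx])
      have e2: "wick h (psmult (cnj t) b) x = psmult (cnj t) (wick h b x)"
        by (rule wick_psmult_left[OF fb(1) fx])
      have e3: "wick h b x = padd (psmult t (wick h b (pstar b))) (wick h b c)"
        unfolding x_def wick_padd_right[OF fb(1) fs_psmult[OF fb(2)] fb(3)] wick_psmult_right[OF fb(1) fb(2)] ..
      have e4: "wick h c x = padd (psmult t (wick h c (pstar b))) (wick h c c)"
        unfolding x_def wick_padd_right[OF fb(3) fs_psmult[OF fb(2)] fb(3)] wick_psmult_right[OF fb(3) fb(2)] ..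
      show ?thesis unfolding px e1 e2 e3 e4 ..
    qed
    moreover have "\<omega> \<dots> = cnj t * (t * ?A + ?\<beta>) + (t * ?\<gamma> + 0)"
      using st b bs c cc
      by (simp add: state_add state_smult Bset_padd Bset_psmult Bset_wick)
    moreover have "0 \<le> \<omega> (wick h (pstar x) x)" using st sq_Bplus[OF h xB] by (simp add: state_pos)
    ultimately show ?thesis by (simp add: algebra_simps)
  qed
  show ?thesis by (rule cs_alg[OF A q])
qed

lemma wick_cJ_eq: "wick h (padd Jpol (psmult (- of_real \<mu>) pone)) (padd Jpol (psmult (- of_real \<mu>) pone)) = wick h (cJ \<mu>) (cJ \<mu>)"
  by (simp add: cJ_def)

lemma state_cp:
  assumes h: "0 < h" and st: "is_state h \<omega>" and cc: "\<omega> (wick h (cJ \<mu>) (cJ \<mu>)) = 0"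
  shows "\<omega> (cp h \<mu> (Suc n) :: 'i::finite pol) = 0"
  using state_kill[OF h st Bset_cJ herm_cJ cc Bset_cp] by simp

lemma Rset_padd:
  assumes f: "f \<in> Rset h \<mu>" and g: "g \<in> Rset h \<mu>"
  shows "padd f g \<in> Rset h \<mu>"
proof -
  have B: "f \<in> Bset" "g \<in> Bset" "hermitian f" "hermitian g" using f g by (auto simp: Rset_def)
  have "hermitian (padd f g)" using B by (simp add: hermitian_def pstar_padd)
  moreover have "0 \<le> \<omega> (padd f g)" if "is_state h \<omega>" "\<omega> (wick h (padd Jpol (psmult (- of_real \<mu>) pone)) (padd Jpol (psmult (- of_real \<mu>) pone))) = 0" for \<omega>
  proof -
    have "0 \<le> \<omega> f" "0 \<le> \<omega> g" using f g that by (auto simp: Rset_def)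
    thus ?thesis using that(1) B by (simp add: state_add)
  qed
  ultimately show ?thesis using Bset_padd[OF B(1,2)] by (simp add: Rset_def)
qed

lemma Bpp_Rset:
  assumes h: "0 < h" and f: "f \<in> Bpp h"
  shows "f \<in> Rset h \<mu>"
proof -
  have "f \<in> Bplus h" by (rule Bpp_Bplus[OF h f])
  thus ?thesis by (auto simp: Rset_def Bplus_def is_state_def)
qed

lemma supset_dir:
  assumes h: "0 < h"
  shows "setsum (Bpp h) (csupp (Rset h \<mu>)) \<subseteq> Rset h \<mu>"
proof
  fix x assume "x \<in> setsum (Bpp h) (csupp (Rset h \<mu>))"
  then obtain a b where "x = padd a b" "a \<in> Bpp h" "b \<in> Rset h \<mu>"
    by (auto simp: setsum_def csupp_def)
  thus "x \<in> Rset h \<mu>" using Rset_padd Bpp_Rset[OF h] by blast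
qed


lemma ffact_le: "r + a \<le> N \<Longrightarrow> fact (r + a) / fact r \<le> (real N) ^ a"
proof (induction a)
  case 0 thus ?case by simp
next
  case (Suc a)
  have "fact (r + Suc a) / fact r = real (r + Suc a) * (fact (r + a) / fact r)"
    by (simp add: algebra_simps)
  also have "\<dots> \<le> real N * real N ^ a"
    using Suc by (intro mult_mono) (auto simp: divide_nonneg_nonneg)
  finally show ?case by simp
qed

lemma amgm3:
  fixes a b c x y M :: real
  assumes "0 \<le> a" "0 \<le> b" "0 \<le> c" "0 \<le> x" "0 \<le> y" "0 \<le> M" "c\<^sup>2 \<le> M\<^sup>2 * x * y"
  shows "a * b * c \<le> M / 2 * (a\<^sup>2 * x + b\<^sup>2 * y)"
proof -
  have "c \<le> M * sqrt (x * y)"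
    using assms by (metis mult.assoc real_le_rsqrt real_sqrt_mult real_sqrt_pow2 real_sqrt_unique zero_le_mult_iff mult_nonneg_nonneg)
  hence "a * b * c \<le> a * b * (M * sqrt (x * y))" using assms by (intro mult_left_mono) auto
  also have "a * b * sqrt (x * y) \<le> (a\<^sup>2 * x + b\<^sup>2 * y) / 2"
  proof -
    have "0 \<le> (a * sqrt x - b * sqrt y)\<^sup>2" by simp
    hence "2 * (a * sqrt x) * (b * sqrt y) \<le> (a * sqrt x)\<^sup>2 + (b * sqrt y)\<^sup>2" by (simp add: power2_diff)
    thus ?thesis using assms by (simp add: real_sqrt_mult power_mult_distrib mult_ac)
  qed
  hence "a * b * (M * sqrt (x * y)) \<le> M / 2 * (a\<^sup>2 * x + b\<^sup>2 * y)"
    using assms by (metis (no_types, lifting) mult.commute mult.left_commute mult_left_mono times_divide_eq_right)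
  finally show ?thesis .
qed

lemma cbound:
  fixes G PK PL H hk N :: real
  assumes "0 < G" "0 \<le> PK" "0 \<le> PL" "0 \<le> H" "0 \<le> hk" "PK / G \<le> N" "PL / G \<le> N"
  shows "(hk * (PL / G) * (H * PK))\<^sup>2 \<le> (hk * N)\<^sup>2 * (H * PK) * (H * PL)"
proof -
  have "0 \<le> PK / G" using assms by simp
  hence N: "0 \<le> N" using assms by linarith
  have "(hk * (PL / G) * (H * PK))\<^sup>2 = hk\<^sup>2 * H\<^sup>2 * PK * PL * ((PK / G) * (PL / G))"
    using assms by (simp add: power2_eq_square field_simps)
  also have "\<dots> \<le> hk\<^sup>2 * H\<^sup>2 * PK * PL * (N * N)"
    using assms N by (intro mult_left_mono mult_mono) (auto simp: divide_nonneg_nonneg)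
  also have "\<dots> = (hk * N)\<^sup>2 * (H * PK) * (H * PL)" by (simp add: power2_eq_square)
  finally show ?thesis .
qed

lemma le_mabs: "R i \<le> mabs R"
  unfolding mabs_def by (rule member_le_sum) auto

lemma prod_ffact_le: "(\<Prod>i\<in>UNIV. fact (R i + K i) / fact (R i)) \<le> real (mabs R + mabs K) ^ mabs K"
proof -
  have "(\<Prod>i\<in>UNIV. fact (R i + K i) / fact (R i)) \<le> (\<Prod>i\<in>UNIV. real (mabs R + mabs K) ^ K i)"
  proof (rule prod_mono)
    fix i :: 'a
    have "R i + K i \<le> mabs R + mabs K" using le_mabs[of R i] le_mabs[of K i] by simp
    thus "0 \<le> (fact (R i + K i) / fact (R i) :: real) \<and> fact (R i + K i) / fact (R i) \<le> real (mabs R + mabs K) ^ K i"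
      using ffact_le[of "R i" "K i" "mabs R + mabs K"] by (simp add: zero_le_divide_iff)
  qed
  also have "\<dots> = real (mabs R + mabs K) ^ mabs K" by (simp add: mabs_def power_sum)
  finally show ?thesis .
qed

lemma sum_reindex_le:
  fixes g :: "'i::finite mi \<Rightarrow> real"
  assumes A: "finite A" and S: "finite S" and g0: "\<And>P. 0 \<le> g P" and gS: "\<And>P. P \<notin> S \<Longrightarrow> g P = 0"
  shows "(\<Sum>R\<in>A. g (R + K)) \<le> (\<Sum>P\<in>S. g P)"
proof -
  have inj: "inj_on (\<lambda>R. R + K) X" for X by (auto intro: inj_onI)
  have "(\<Sum>R\<in>A. g (R + K)) = (\<Sum>R\<in>A \<inter> {R. R + K \<in> S}. g (R + K))"
    using A gS by (intro sum.mono_neutral_right) auto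
  also have "\<dots> = (\<Sum>P\<in>(\<lambda>R. R + K) ` (A \<inter> {R. R + K \<in> S}). g P)"
    by (simp add: sum.reindex[OF inj])
  also have "\<dots> \<le> (\<Sum>P\<in>S. g P)"
    using S g0 by (intro sum_mono2) auto
  finally show ?thesis .
qed

lemma finner_sum_right: "finner h u (\<lambda>K. \<Sum>p\<in>F. c p * w p K) = (\<Sum>p\<in>F. c p * finner h u (w p))"
proof -
  have "finner h u (\<lambda>K. \<Sum>p\<in>F. c p * w p K) = (\<Sum>K\<in>{K. u K \<noteq> 0}. \<Sum>p\<in>F. c p * (cnj (u K) * w p K * of_real (h ^ mabs K * real (mfact K))))"
    unfolding finner_def by (simp add: sum_distrib_left sum_distrib_right mult_ac)
  also have "\<dots> = (\<Sum>p\<in>F. \<Sum>K\<in>{K. u K \<noteq> 0}. c p * (cnj (u K) * w p K * of_real (h ^ mabs K * real (mfact K))))"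
    by (rule sum.swap)
  finally show ?thesis by (simp add: finner_def sum_distrib_left)
qed

lemma mono_bound:
  fixes K L :: "'i::finite mi"
  assumes h: "0 < h" and v: "v \<in> Fock" and KL: "mabs K = mabs L"
  shows "cmod (finner h v (pm h K L v)) \<le> (\<Sum>P\<in>{P. v P \<noteq> 0}. (cmod (v P))\<^sup>2 * wt h P * (h * real (mabs P)) ^ mabs K)"
proof -
  define k where "k = mabs K"
  define R0 where "R0 = {R. v (R + K) \<noteq> 0}"
  define g where "g P = (cmod (v P))\<^sup>2 * wt h P * (h * real (mabs P)) ^ k" for P :: "'i mi"
  have fu: "finite {K. v K \<noteq> 0}" using v by (simp add: Fock_def)
  have injK: "inj (\<lambda>R. R + K)" by (auto intro: injI)
  have fR0: "finite R0" unfolding R0_def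
    using finite_vimageI[OF fu injK] by (simp add: vimage_def)
  have sub1: "{P. v P \<noteq> 0} \<inter> {P. pm h K L v P \<noteq> 0} \<subseteq> (\<lambda>R. R + K) ` R0"
  proof
    fix P assume P: "P \<in> {P. v P \<noteq> 0} \<inter> {P. pm h K L v P \<noteq> 0}"
    hence KP: "K \<le> P" by (auto simp: pm_alt split: if_splits)
    hence "P = (P - K) + K" by (auto simp: fun_eq_iff le_fun_def)
    thus "P \<in> (\<lambda>R. R + K) ` R0" using P unfolding R0_def by (metis (mono_tags) IntD1 image_eqI mem_Collect_eq)
  qed
  define c where "c R = h ^ mabs L * (\<Prod>i\<in>UNIV. fact (R i + L i) / fact (R i)) * wt h (R + K)" for R
  define M where "M R = (h * real (mabs R + k)) ^ k" for R :: "'i mi"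
  have "finner h v (pm h K L v) = ip h ((\<lambda>R. R + K) ` R0) v (pm h K L v)"
    by (rule finner_ip[OF v]) (use fR0 sub1 in auto)
  also have "\<dots> = (\<Sum>R\<in>R0. cnj (v (R + K)) * pm h K L v (R + K) * of_real (wt h (R + K)))"
    unfolding ip_def by (subst sum.reindex) (use injK in \<open>auto simp: inj_on_def\<close>)
  also have "\<dots> = (\<Sum>R\<in>R0. cnj (v (R + K)) * v (R + L) * of_real (c R))"
  proof (rule sum.cong[OF refl])
    fix R :: "'i mi"
    have e1: "R + K - K = R" by (auto simp: fun_eq_iff)
    have le: "K \<le> R + K" by (auto simp: le_fun_def)
    show "cnj (v (R + K)) * pm h K L v (R + K) * of_real (wt h (R + K)) = cnj (v (R + K)) * v (R + L) * of_real (c R)"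
      unfolding pm_alt e1 c_def using le by (simp add: mult_ac del: of_real_prod)
  qed
  finally have eq: "finner h v (pm h K L v) = (\<Sum>R\<in>R0. cnj (v (R + K)) * v (R + L) * of_real (c R))" .
  have c0: "0 \<le> c R" for R using h by (auto simp: c_def intro!: mult_nonneg_nonneg prod_nonneg divide_nonneg_nonneg less_imp_le[OF wt_pos])
  have "cmod (finner h v (pm h K L v)) \<le> (\<Sum>R\<in>R0. cmod (v (R + K)) * cmod (v (R + L)) * c R)"
    unfolding eq by (rule order_trans[OF norm_sum]) (simp add: norm_mult c0)
  also have "\<dots> \<le> (\<Sum>R\<in>R0. M R / 2 * ((cmod (v (R + K)))\<^sup>2 * wt h (R + K) + (cmod (v (R + L)))\<^sup>2 * wt h (R + L)))"
  proof (rule sum_mono)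
    fix R :: "'i mi"
    define G where "G = (\<Prod>i\<in>UNIV. fact (R i) :: real)"
    define PK where "PK = (\<Prod>i\<in>UNIV. fact (R i + K i) :: real)"
    define PL where "PL = (\<Prod>i\<in>UNIV. fact (R i + L i) :: real)"
    define H where "H = h ^ (mabs R + k)"
    have G: "0 < G" by (simp add: G_def prod_pos)
    have wK: "wt h (R + K) = H * PK" by (simp add: wt_def mfact_def H_def PK_def mabs_add k_def)
    have wL: "wt h (R + L) = H * PL" by (simp add: wt_def mfact_def H_def PL_def mabs_add k_def KL)
    have cR: "c R = h ^ k * (PL / G) * (H * PK)"
      by (simp add: c_def wK PL_def G_def prod_dividef KL k_def)
    have MR: "M R = h ^ k * real (mabs R + k) ^ k" by (simp add: M_def power_mult_distrib)
    have bK: "PK / G \<le> real (mabs R + k) ^ k"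
      using prod_ffact_le[of R K] by (simp add: PK_def G_def prod_dividef k_def)
    have bL: "PL / G \<le> real (mabs R + k) ^ k"
      using prod_ffact_le[of R L] by (simp add: PL_def G_def prod_dividef k_def KL)
    have "(c R)\<^sup>2 \<le> (M R)\<^sup>2 * wt h (R + K) * wt h (R + L)"
      unfolding cR MR wK wL
      by (rule cbound[OF G]) (use h bK bL in \<open>auto simp: PK_def PL_def H_def prod_nonneg\<close>)
    thus "cmod (v (R + K)) * cmod (v (R + L)) * c R \<le> M R / 2 * ((cmod (v (R + K)))\<^sup>2 * wt h (R + K) + (cmod (v (R + L)))\<^sup>2 * wt h (R + L))"
      using h c0 by (intro amgm3) (auto simp: M_def less_imp_le[OF wt_pos])
  qed
  also have "\<dots> = (\<Sum>R\<in>R0. g (R + K) / 2 + g (R + L) / 2)"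
    by (rule sum.cong[OF refl]) (simp add: g_def M_def mabs_add KL k_def algebra_simps)
  also have "\<dots> = (\<Sum>R\<in>R0. g (R + K)) / 2 + (\<Sum>R\<in>R0. g (R + L)) / 2"
    by (simp add: sum.distrib sum_divide_distrib)
  also have "\<dots> \<le> (\<Sum>P\<in>{P. v P \<noteq> 0}. g P) / 2 + (\<Sum>P\<in>{P. v P \<noteq> 0}. g P) / 2"
  proof -
    have g0: "0 \<le> g P" for P using h by (auto simp: g_def less_imp_le[OF wt_pos])
    have gS: "P \<notin> {P. v P \<noteq> 0} \<Longrightarrow> g P = 0" for P by (simp add: g_def)
    show ?thesis
      using sum_reindex_le[of R0 "{P. v P \<noteq> 0}" g K, OF fR0 fu g0 gS] sum_reindex_le[of R0 "{P. v P \<noteq> 0}" g L, OF fR0 fu g0 gS] by simp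
  qed
  also have "\<dots> = (\<Sum>P\<in>{P. v P \<noteq> 0}. (cmod (v P))\<^sup>2 * wt h P * (h * real (mabs P)) ^ mabs K)"
    by (simp add: g_def k_def)
  finally show ?thesis .
qed


lemma piop_bound:
  fixes s :: "'i::finite pol"
  assumes h: "0 < h" and s: "s \<in> Bset" and v: "v \<in> Fock"
    and k0: "\<And>p. s p \<noteq> 0 \<Longrightarrow> mabs (snd p) \<le> k0"
  shows "cmod (finner h v (piop h s v)) \<le> (\<Sum>p\<in>{p. s p \<noteq> 0}. cmod (s p)) *
           (\<Sum>P\<in>{P. v P \<noteq> 0}. (cmod (v P))\<^sup>2 * wt h P * (1 + h * real (mabs P)) ^ k0)"
proof -
  let ?T = "(\<Sum>P\<in>{P. v P \<noteq> 0}. (cmod (v P))\<^sup>2 * wt h P * (1 + h * real (mabs P)) ^ k0)"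
  have "finner h v (piop h s v) = (\<Sum>p\<in>{p. s p \<noteq> 0}. s p * finner h v (pm h (fst p) (snd p) v))"
    unfolding piop_fun by (rule finner_sum_right)
  hence "cmod (finner h v (piop h s v)) \<le> (\<Sum>p\<in>{p. s p \<noteq> 0}. cmod (s p) * cmod (finner h v (pm h (fst p) (snd p) v)))"
    by (simp add: norm_mult order_trans[OF norm_sum])
  also have "\<dots> \<le> (\<Sum>p\<in>{p. s p \<noteq> 0}. cmod (s p) * ?T)"
  proof (rule sum_mono)
    fix p assume p: "p \<in> {p. s p \<noteq> 0}"
    obtain K L where pKL: "p = (K, L)" by (cases p)
    have KL: "mabs K = mabs L" using s p pKL by (auto simp: Bset_iff bideg_def)
    have kk: "mabs K \<le> k0" using k0[of p] p pKL KL by simp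
    have "cmod (finner h v (pm h K L v)) \<le> (\<Sum>P\<in>{P. v P \<noteq> 0}. (cmod (v P))\<^sup>2 * wt h P * (h * real (mabs P)) ^ mabs K)"
      by (rule mono_bound[OF h v KL])
    also have "\<dots> \<le> ?T"
    proof (rule sum_mono)
      fix P :: "'i mi"
      have "(h * real (mabs P)) ^ mabs K \<le> (1 + h * real (mabs P)) ^ mabs K"
        using h by (intro power_mono) auto
      also have "\<dots> \<le> (1 + h * real (mabs P)) ^ k0"
        using h kk by (intro power_increasing) auto
      finally show "(cmod (v P))\<^sup>2 * wt h P * (h * real (mabs P)) ^ mabs K \<le> (cmod (v P))\<^sup>2 * wt h P * (1 + h * real (mabs P)) ^ k0"
        using h by (intro mult_left_mono) (auto simp: less_imp_le[OF wt_pos])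
    qed
    finally show "cmod (s p) * cmod (finner h v (pm h (fst p) (snd p) v)) \<le> cmod (s p) * ?T"
      using pKL by (simp add: mult_left_mono)
  qed
  also have "\<dots> = (\<Sum>p\<in>{p. s p \<noteq> 0}. cmod (s p)) * ?T" by (simp add: sum_distrib_right)
  finally show ?thesis .
qed

lemma delta_ex:
  assumes h: "0 < h"
  shows "\<exists>\<delta>>0. \<forall>d::nat. h * real d \<noteq> \<mu> \<longrightarrow> \<delta> \<le> \<bar>h * real d - \<mu>\<bar>"
proof -
  define N where "N = nat \<lceil>\<mu> / h\<rceil> + 1"
  define D where "D = {d. d \<le> N \<and> h * real d \<noteq> \<mu>}"
  define \<delta> where "\<delta> = Min (insert h ((\<lambda>d. \<bar>h * real d - \<mu>\<bar>) ` D))"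
  have fD: "finite D" by (simp add: D_def)
  have "\<delta> > 0" unfolding \<delta>_def using fD h by (auto simp: D_def)
  moreover have "\<delta> \<le> \<bar>h * real d - \<mu>\<bar>" if d: "h * real d \<noteq> \<mu>" for d
  proof (cases "d \<le> N")
    case True
    thus ?thesis unfolding \<delta>_def using fD d by (intro Min_le) (auto simp: D_def)
  next
    case False
    hence "real d \<ge> real N + 1" by simp
    moreover have "real N \<ge> \<mu> / h" unfolding N_def by linarith
    ultimately have "real d \<ge> \<mu> / h + 1" by simp
    hence "h * real d \<ge> h * (\<mu> / h + 1)" using h by (simp add: mult_left_mono)
    hence "h * real d \<ge> \<mu> + h" using h by (simp add: distrib_left)
    hence "\<bar>h * real d - \<mu>\<bar> \<ge> h" by simp
    moreover have "\<delta> \<le> h" unfolding \<delta>_def using fD by (intro Min_le) auto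
    ultimately show ?thesis by simp
  qed
  ultimately show ?thesis by blast
qed

lemma weight_le:
  fixes x \<mu> \<delta> :: real
  assumes d: "0 < \<delta>" "\<delta> \<le> \<bar>x - \<mu>\<bar>" and x: "0 \<le> x" and mu: "0 \<le> \<mu>"
  shows "(1 + x) ^ e \<le> (2 + \<mu>) ^ e / (min 1 \<delta>) ^ (2 * e) * (x - \<mu>) ^ (2 * e)"
proof -
  define t where "t = \<bar>x - \<mu>\<bar>"
  define d' where "d' = min 1 \<delta>"
  have d': "0 < d'" "d' \<le> 1" "d' \<le> t" using d by (auto simp: d'_def t_def)
  define q where "q = t / d'"
  have q1: "1 \<le> q" using d' by (simp add: q_def)
  have qt: "t \<le> q" using d' q1 unfolding q_def
    by (metis div_by_1 divide_left_mono dual_order.trans less_eq_real_def mult_cancel_right1 nonzero_mult_div_cancel_left)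
  have "1 + x \<le> 1 + \<mu> + t" by (simp add: t_def)
  also have "\<dots> \<le> (1 + \<mu>) * q + q"
  proof -
    have "1 + \<mu> \<le> (1 + \<mu>) * q" using q1 mu by (simp add: mult_le_cancel_left1)
    thus ?thesis using qt by linarith
  qed
  also have "\<dots> = (2 + \<mu>) * q" by (simp add: algebra_simps)
  finally have a: "1 + x \<le> (2 + \<mu>) * q" .
  have "(1 + x) ^ e \<le> ((2 + \<mu>) * q) ^ e" using a x by (intro power_mono) auto
  also have "\<dots> \<le> ((2 + \<mu>) * q\<^sup>2) ^ e"
    using q1 mu by (intro power_mono mult_left_mono) (auto simp: power2_eq_square)
  also have "\<dots> = (2 + \<mu>) ^ e / d' ^ (2 * e) * t ^ (2 * e)"
  proof -
    have "((2 + \<mu>) * q\<^sup>2) ^ e = (2 + \<mu>) ^ e * q ^ (2 * e)" by (simp add: power_mult_distrib power_mult)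
    moreover have "q ^ (2 * e) = t ^ (2 * e) / d' ^ (2 * e)" by (simp add: q_def power_divide)
    ultimately show ?thesis by simp
  qed
  also have "t ^ (2 * e) = (x - \<mu>) ^ (2 * e)" unfolding t_def by (simp add: power_mult power2_abs)
  finally show ?thesis by (simp add: d'_def)
qed

lemma Fock_add: assumes "a \<in> Fock" "b \<in> Fock" shows "(\<lambda>K. a K + b K) \<in> Fock"
proof -
  have "{K. a K + b K \<noteq> 0} \<subseteq> {K. a K \<noteq> 0} \<union> {K. b K \<noteq> 0}" by auto
  moreover have "finite ({K. a K \<noteq> 0} \<union> {K. b K \<noteq> 0})" using assms by (simp add: Fock_def)
  ultimately show ?thesis unfolding Fock_def by (auto intro: finite_subset)
qed

lemma finner_add_left:
  assumes a: "a \<in> Fock" and b: "b \<in> Fock"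
  shows "finner h (\<lambda>K. a K + b K) w = finner h a w + finner h b w"
proof -
  let ?S = "{K. a K \<noteq> 0} \<union> {K. b K \<noteq> 0}"
  have S: "finite ?S" using a b by (simp add: Fock_def)
  have "finner h (\<lambda>K. a K + b K) w = ip h ?S (\<lambda>K. a K + b K) w"
    by (rule finner_ip[OF Fock_add[OF a b] S]) auto
  also have "\<dots> = ip h ?S a w + ip h ?S b w"
    by (simp add: ip_def distrib_right sum.distrib)
  also have "\<dots> = finner h a w + finner h b w"
  proof -
    have "finner h a w = ip h ?S a w" by (rule finner_ip[OF a S]) auto
    moreover have "finner h b w = ip h ?S b w" by (rule finner_ip[OF b S]) auto
    ultimately show ?thesis by simp
  qed
  finally show ?thesis .
qed

lemma finner_cnj:
  assumes u: "u \<in> Fock" and v: "v \<in> Fock"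
  shows "finner h v u = cnj (finner h u v)"
proof -
  let ?S = "{K. u K \<noteq> 0} \<union> {K. v K \<noteq> 0}"
  have S: "finite ?S" using u v by (simp add: Fock_def)
  have "finner h v u = ip h ?S v u" by (rule finner_ip[OF v S]) auto
  moreover have "finner h u v = ip h ?S u v" by (rule finner_ip[OF u S]) auto
  ultimately show ?thesis by (simp add: ip_def cnj_sum mult_ac)
qed

lemma herm_real:
  assumes s: "fs s" "hermitian s" and u: "u \<in> Fock"
  shows "cnj (finner h u (piop h s u)) = finner h u (piop h s u)"
proof -
  have "finner h u (piop h s u) = finner h (piop h s u) u"
    using piop_adj[OF u u s(1), of h] s(2) by (simp add: hermitian_def)
  also have "\<dots> = cnj (finner h u (piop h s u))" by (rule finner_cnj[OF u Fock_piop[OF u s(1)]])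
  finally show ?thesis by simp
qed

lemma piop_degree:
  assumes s: "s \<in> Bset" and w: "\<And>Q. mabs Q = mabs P \<Longrightarrow> w Q = 0"
  shows "piop h s w P = 0"
  unfolding piop_alt
proof (rule sum.neutral, intro ballI)
  fix p assume p: "p \<in> {p. s p \<noteq> 0}"
  obtain K L where pKL: "p = (K, L)" by (cases p)
  have KL: "mabs K = mabs L" using s p pKL by (auto simp: Bset_iff bideg_def)
  have "pm h K L w P = 0"
  proof (cases "K \<le> P")
    case True
    have "mabs (P - K + L) = mabs P" using mabs_sub[OF True] KL by (simp add: mabs_add)
    thus ?thesis using True w by (simp add: pm_alt)
  qed (simp add: pm_alt)
  thus "s p * pm h (fst p) (snd p) w P = 0" using pKL by simp
qed

lemma finner_mul:
  "finner h u (\<lambda>P. of_real (d P) * u P) = of_real (\<Sum>P\<in>{P. u P \<noteq> 0}. (cmod (u P))\<^sup>2 * wt h P * d P)"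
proof -
  have cz: "cnj z * z = of_real ((cmod z)\<^sup>2)" for z :: complex
    by (metis complex_norm_square mult.commute of_real_power)
  have aux: "cnj z * (of_real r * z) * of_real w = (of_real ((cmod z)\<^sup>2 * w * r) :: complex)" for z r w
  proof -
    have "cnj z * (of_real r * z) * of_real w = (cnj z * z) * of_real w * of_real r" by (simp add: mult_ac)
    also have "\<dots> = of_real ((cmod z)\<^sup>2) * of_real w * of_real r" by (simp only: cz)
    finally show ?thesis by simp
  qed
  show ?thesis unfolding finner_def wt_def of_real_sum
    by (intro sum.cong refl) (rule aux)
qed


lemma supp_bplus:
  fixes s :: "'i::finite pol"
  assumes h: "0 < h" and mu: "0 \<le> \<mu>" and s: "s \<in> Bset" and hs: "hermitian s"
    and Z: "\<And>u. u \<in> Fock \<Longrightarrow> (\<And>P. u P \<noteq> 0 \<Longrightarrow> h * real (mabs P) = \<mu>) \<Longrightarrow> finner h u (piop h s u) = 0"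
  shows "\<exists>C n. \<forall>\<epsilon>\<in>{1, -1::real}. padd (psmult (of_real \<epsilon>) s) (psmult (of_real C) (cp h \<mu> (Suc n))) \<in> Bplus h"
proof -
  have fs: "fs s" using s by (rule Bset_fs)
  define k0 where "k0 = (\<Sum>p\<in>{p. s p \<noteq> 0}. mabs (snd p))"
  have k0: "mabs (snd p) \<le> k0" if "s p \<noteq> 0" for p
    unfolding k0_def using fs that by (intro member_le_sum[of p]) auto
  define e where "e = k0 + 1"
  define n where "n = 2 * k0"
  have Sn: "Suc (Suc n) = 2 * e" by (simp add: n_def e_def)
  define Sabs where "Sabs = (\<Sum>p\<in>{p. s p \<noteq> 0}. cmod (s p))"
  have Sabs0: "0 \<le> Sabs" by (simp add: Sabs_def sum_nonneg)
  obtain \<delta> where \<delta>: "\<delta> > 0" "\<And>d::nat. h * real d \<noteq> \<mu> \<Longrightarrow> \<delta> \<le> \<bar>h * real d - \<mu>\<bar>"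
    using delta_ex[OF h, of \<mu>] by blast
  define Cw where "Cw = (2 + \<mu>) ^ e / (min 1 \<delta>) ^ (2 * e)"
  have Cw0: "0 \<le> Cw" using mu \<delta> by (simp add: Cw_def)
  define C where "C = Sabs * Cw"
  have C0: "0 \<le> C" using Sabs0 Cw0 by (simp add: C_def)
  let ?y = "cp h \<mu> (Suc n) :: 'i pol"
  have "padd (psmult (of_real \<epsilon>) s) (psmult (of_real C) ?y) \<in> Bplus h" if eps: "\<epsilon> \<in> {1, -1::real}" for \<epsilon>
  proof -
    let ?f = "padd (psmult (of_real \<epsilon>) s) (psmult (of_real C) ?y)"
    have fB: "?f \<in> Bset" by (rule Bset_padd[OF Bset_psmult[OF s] Bset_psmult[OF Bset_cp]])
    have hs': "pstar s = s" using hs unfolding hermitian_def .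
    have hy: "pstar ?y = ?y" using herm_cp[OF h, of \<mu> "Suc n"] unfolding hermitian_def .
    have fH: "hermitian ?f" unfolding hermitian_def pstar_padd pstar_psmult hs' hy by simp
    have pos: "0 \<le> finner h u (piop h ?f u)" if u: "u \<in> Fock" for u
    proof -
      define X where "X = finner h u (piop h s u)"
      define Y where "Y = (\<Sum>P\<in>{P. u P \<noteq> 0}. (cmod (u P))\<^sup>2 * wt h P * (h * real (mabs P) - \<mu>) ^ (2 * e))"
      have fu: "finite {P. u P \<noteq> 0}" using u by (simp add: Fock_def)
      have yf: "fs ?y" by (rule fs_cp)
      have pf: "piop h ?f u = (\<lambda>P. of_real \<epsilon> * piop h s u P + of_real C * (of_real ((h * real (mabs P) - \<mu>) ^ (2 * e)) * u P))"
      proof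
        fix P
        have "piop h ?f u P = of_real \<epsilon> * piop h s u P + of_real C * piop h ?y u P"
          by (simp only: piop_padd[OF fs_psmult[OF fs] fs_psmult[OF yf]] piop_psmult[OF fs] piop_psmult[OF yf])
        also have "piop h ?y u P = of_real ((h * real (mabs P) - \<mu>) ^ (2 * e)) * u P"
          by (simp only: piop_cp Sn)
        finally show "piop h ?f u P = of_real \<epsilon> * piop h s u P + of_real C * (of_real ((h * real (mabs P) - \<mu>) ^ (2 * e)) * u P)" .
      qed
      have eq: "finner h u (piop h ?f u) = of_real \<epsilon> * X + of_real C * of_real Y"
        unfolding pf X_def Y_def
        by (simp only: finner_add_right finner_smult_right finner_mul)
      define u1 where "u1 = (\<lambda>P. if h * real (mabs P) = \<mu> then u P else 0)"
      define u2 where "u2 = (\<lambda>P. if h * real (mabs P) = \<mu> then 0 else u P)"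
      have u1: "u1 \<in> Fock" using fu unfolding Fock_def u1_def by (auto intro: finite_subset)
      have u2: "u2 \<in> Fock" using fu unfolding Fock_def u2_def by (auto intro: finite_subset)
      have uu: "u = (\<lambda>K. u1 K + u2 K)" by (auto simp: u1_def u2_def fun_eq_iff)
      have pu: "piop h s u = (\<lambda>P. piop h s u1 P + piop h s u2 P)"
        by (subst uu) (simp add: piop_uadd fun_eq_iff)
      have z11: "finner h u1 (piop h s u1) = 0"
        by (rule Z[OF u1]) (auto simp: u1_def split: if_splits)
      have z12: "finner h u1 (piop h s u2) = 0"
        unfolding finner_def
      proof (rule sum.neutral, intro ballI)
        fix P assume "P \<in> {K. u1 K \<noteq> 0}"
        hence "h * real (mabs P) = \<mu>" by (auto simp: u1_def split: if_splits)
        hence "piop h s u2 P = 0" by (intro piop_degree[OF s]) (auto simp: u2_def)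
        thus "cnj (u1 P) * piop h s u2 P * of_real (h ^ mabs P * real (mfact P)) = 0" by simp
      qed
      have z21: "finner h u2 (piop h s u1) = 0"
        unfolding finner_def
      proof (rule sum.neutral, intro ballI)
        fix P assume "P \<in> {K. u2 K \<noteq> 0}"
        hence "h * real (mabs P) \<noteq> \<mu>" by (auto simp: u2_def split: if_splits)
        hence "piop h s u1 P = 0" by (intro piop_degree[OF s]) (auto simp: u1_def)
        thus "cnj (u2 P) * piop h s u1 P * of_real (h ^ mabs P * real (mfact P)) = 0" by simp
      qed
      have XX: "X = finner h u2 (piop h s u2)"
      proof -
        have "X = finner h (\<lambda>K. u1 K + u2 K) (\<lambda>P. piop h s u1 P + piop h s u2 P)"
          unfolding X_def by (subst pu, subst (1) uu) (rule refl)
        also have "\<dots> = finner h u2 (piop h s u2)"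
          by (simp add: finner_add_left[OF u1 u2] finner_add_right z11 z12 z21)
        finally show ?thesis .
      qed
      have Xr: "cnj X = X" unfolding X_def by (rule herm_real[OF fs hs u])
      have "cmod X \<le> Sabs * (\<Sum>P\<in>{P. u2 P \<noteq> 0}. (cmod (u2 P))\<^sup>2 * wt h P * (1 + h * real (mabs P)) ^ k0)"
        unfolding XX Sabs_def by (rule piop_bound[OF h s u2 k0])
      also have "\<dots> \<le> Sabs * (\<Sum>P\<in>{P. u2 P \<noteq> 0}. (cmod (u P))\<^sup>2 * wt h P * (Cw * (h * real (mabs P) - \<mu>) ^ (2 * e)))"
      proof (intro mult_left_mono[OF _ Sabs0] sum_mono)
        fix P assume P: "P \<in> {P. u2 P \<noteq> 0}"
        hence ne: "h * real (mabs P) \<noteq> \<mu>" and uP: "u2 P = u P" by (auto simp: u2_def split: if_splits)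
        have "(1 + h * real (mabs P)) ^ k0 \<le> (1 + h * real (mabs P)) ^ e"
          using h by (intro power_increasing) (auto simp: e_def)
        also have "\<dots> \<le> Cw * (h * real (mabs P) - \<mu>) ^ (2 * e)"
          unfolding Cw_def using \<delta>(1) \<delta>(2)[OF ne] h mu by (intro weight_le) auto
        finally show "(cmod (u2 P))\<^sup>2 * wt h P * (1 + h * real (mabs P)) ^ k0 \<le> (cmod (u P))\<^sup>2 * wt h P * (Cw * (h * real (mabs P) - \<mu>) ^ (2 * e))"
          unfolding uP using h by (intro mult_left_mono) (auto simp: less_imp_le[OF wt_pos])
      qed
      also have "\<dots> = C * (\<Sum>P\<in>{P. u2 P \<noteq> 0}. (cmod (u P))\<^sup>2 * wt h P * (h * real (mabs P) - \<mu>) ^ (2 * e))"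
        by (simp add: C_def sum_distrib_left mult_ac)
      also have "\<dots> \<le> C * Y"
        unfolding Y_def
      proof (intro mult_left_mono[OF _ C0] sum_mono2[OF fu])
        show "{P. u2 P \<noteq> 0} \<subseteq> {P. u P \<noteq> 0}" by (auto simp: u2_def split: if_splits)
        fix P show "0 \<le> (cmod (u P))\<^sup>2 * wt h P * (h * real (mabs P) - \<mu>) ^ (2 * e)"
          using h by (intro mult_nonneg_nonneg) (auto simp: less_imp_le[OF wt_pos] power_mult)
      qed
      finally have XC: "cmod X \<le> C * Y" .
      have ImX: "Im X = 0" using Xr by (metis cnj.simps(2) complex_cnj_cancel_iff neg_equal_zero)
      have "\<bar>Re X\<bar> \<le> cmod X" by (rule abs_Re_le_cmod)
      hence "0 \<le> \<epsilon> * Re X + C * Y" using eps XC by auto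
      thus ?thesis unfolding eq using ImX by (simp add: less_eq_complex_def)
    qed
    show ?thesis using fB fH pos by (simp add: Bplus_def)
  qed
  thus ?thesis by blast
qed

lemma supp_in:
  fixes s :: "'i::finite pol"
  assumes h: "0 < h" and mu: "0 \<le> \<mu>" and s: "s \<in> Bset" and hs: "hermitian s"
    and Z: "\<And>u. u \<in> Fock \<Longrightarrow> (\<And>P. u P \<noteq> 0 \<Longrightarrow> h * real (mabs P) = \<mu>) \<Longrightarrow> finner h u (piop h s u) = 0"
  shows "s \<in> csupp (Rset h \<mu>)"
proof -
  obtain C n where Cn: "\<And>\<epsilon>. \<epsilon> \<in> {1, -1::real} \<Longrightarrow> padd (psmult (of_real \<epsilon>) s) (psmult (of_real C) (cp h \<mu> (Suc n))) \<in> Bplus h"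
    using supp_bplus[OF h mu s hs Z] by blast
  have w0: "\<omega> s = 0" if st: "is_state h \<omega>" and cc: "\<omega> (wick h (cJ \<mu>) (cJ \<mu>)) = 0" for \<omega>
  proof -
    have y0: "\<omega> (cp h \<mu> (Suc n) :: 'i pol) = 0" by (rule state_cp[OF h st cc])
    have yB: "(cp h \<mu> (Suc n) :: 'i pol) \<in> Bset" by (rule Bset_cp)
    have val: "\<omega> (padd (psmult (of_real \<epsilon>) s) (psmult (of_real C) (cp h \<mu> (Suc n)))) = of_real \<epsilon> * \<omega> s" for \<epsilon>
    proof -
      have "\<omega> (padd (psmult (of_real \<epsilon>) s) (psmult (of_real C) (cp h \<mu> (Suc n)))) = \<omega> (psmult (of_real \<epsilon>) s) + \<omega> (psmult (of_real C) (cp h \<mu> (Suc n)))"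
        by (rule state_add[OF st Bset_psmult[OF s] Bset_psmult[OF yB]])
      also have "\<dots> = of_real \<epsilon> * \<omega> s + of_real C * \<omega> (cp h \<mu> (Suc n))"
        by (simp only: state_smult[OF st s] state_smult[OF st yB])
      finally show ?thesis using y0 by simp
    qed
    have "0 \<le> of_real 1 * \<omega> s" using state_pos[OF st Cn[of 1]] val[of 1] by simp
    moreover have "0 \<le> of_real (-1) * \<omega> s" using state_pos[OF st Cn[of "-1"]] val[of "-1"] by simp
    ultimately show "\<omega> s = 0" by simp
  qed
  have sR: "s \<in> Rset h \<mu>"
  proof -
    have "0 \<le> \<omega> s" if "is_state h \<omega>" "\<omega> (wick h (cJ \<mu>) (cJ \<mu>)) = 0" for \<omega> using w0[OF that] by simp
    thus ?thesis using s hs by (auto simp: Rset_def wick_cJ_eq)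
  qed
  have pn: "pneg s = psmult (-1) s" by (simp add: pneg_def psmult_def)
  have nR: "pneg s \<in> Rset h \<mu>"
  proof -
    have "hermitian (pneg s)" using hs by (simp add: pn hermitian_def pstar_psmult)
    moreover have "0 \<le> \<omega> (pneg s)" if "is_state h \<omega>" "\<omega> (wick h (cJ \<mu>) (cJ \<mu>)) = 0" for \<omega>
      using that w0[OF that] s by (simp add: pn state_smult)
    ultimately show ?thesis using Bset_pneg[OF s] by (auto simp: Rset_def wick_cJ_eq)
  qed
  have "s = pneg (pneg s)" by (simp add: pneg_def)
  thus ?thesis using sR nR by (auto simp: csupp_def)
qed


definition qf :: "'a set \<Rightarrow> ('a \<Rightarrow> 'a \<Rightarrow> complex) \<Rightarrow> ('a \<Rightarrow> complex) \<Rightarrow> complex" where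
  "qf S M x = (\<Sum>P\<in>S. \<Sum>Q\<in>S. cnj (x P) * x Q * M P Q)"

lemma qf_shift:
  assumes S: "finite S" and i: "i \<in> S" and herm: "\<And>P Q. P \<in> S \<Longrightarrow> Q \<in> S \<Longrightarrow> M Q P = cnj (M P Q)"
  shows "qf S M (\<lambda>R. x R + (if R = i then t else 0)) =
     qf S M x + cnj t * (\<Sum>Q\<in>S. M i Q * x Q) + t * cnj (\<Sum>Q\<in>S. M i Q * x Q) + cnj t * t * M i i"
proof -
  have "qf S M (\<lambda>R. x R + (if R = i then t else 0)) =
     (\<Sum>P\<in>S. \<Sum>Q\<in>S. cnj (x P) * x Q * M P Q) + (\<Sum>P\<in>S. \<Sum>Q\<in>S. cnj (x P) * (if Q = i then t else 0) * M P Q)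
     + (\<Sum>P\<in>S. \<Sum>Q\<in>S. (if P = i then cnj t else 0) * x Q * M P Q)
     + (\<Sum>P\<in>S. \<Sum>Q\<in>S. (if P = i then cnj t else 0) * (if Q = i then t else 0) * M P Q)"
  proof -
    have ci: "cnj (if P = i then t else 0) = (if P = i then cnj t else 0)" for P by simp
    show ?thesis unfolding qf_def by (simp only: complex_cnj_add ci sum.distrib[symmetric]) (simp add: algebra_simps)
  qed
  also have "(\<Sum>P\<in>S. \<Sum>Q\<in>S. cnj (x P) * (if Q = i then t else 0) * M P Q) = t * cnj (\<Sum>Q\<in>S. M i Q * x Q)"
  proof -
    have "(\<Sum>P\<in>S. \<Sum>Q\<in>S. cnj (x P) * (if Q = i then t else 0) * M P Q) = (\<Sum>P\<in>S. cnj (x P) * t * M P i)"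
    proof -
      have "cnj (x P) * (if Q = i then t else 0) * M P Q = (if Q = i then cnj (x P) * t * M P i else 0)" for P Q by simp
      thus ?thesis using S i by (simp add: sum.delta)
    qed
    also have "\<dots> = (\<Sum>P\<in>S. t * cnj (M i P * x P))"
    proof (rule sum.cong[OF refl])
      fix P assume "P \<in> S"
      hence "M P i = cnj (M i P)" using herm[of i P] i by simp
      thus "cnj (x P) * t * M P i = t * cnj (M i P * x P)" by (simp add: mult_ac)
    qed
    finally show ?thesis by (simp add: sum_distrib_left cnj_sum)
  qed
  also have "(\<Sum>P\<in>S. \<Sum>Q\<in>S. (if P = i then cnj t else 0) * x Q * M P Q) = cnj t * (\<Sum>Q\<in>S. M i Q * x Q)"
  proof -
    have "(\<Sum>Q\<in>S. (if P = i then cnj t else 0) * x Q * M P Q) = (if P = i then cnj t * (\<Sum>Q\<in>S. M i Q * x Q) else 0)" for P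
      by (cases "P = i") (simp_all add: sum_distrib_left mult_ac)
    thus ?thesis using S i by (simp add: sum.delta)
  qed
  also have "(\<Sum>P\<in>S. \<Sum>Q\<in>S. (if P = i then cnj t else 0) * (if Q = i then t else 0) * M P Q) = cnj t * t * M i i"
  proof -
    have a: "(if P = i then cnj t else 0) * (if Q = i then t else 0) * M P Q = (if Q = i then (if P = i then cnj t * t * M i i else 0) else 0)" for P Q
      by simp
    show ?thesis unfolding a using S i by (simp add: sum.delta)
  qed
  finally show ?thesis by (simp add: algebra_simps qf_def)
qed

lemma qf_delta:
  assumes S: "finite S" and Q: "Q \<in> S"
  shows "qf S M (\<lambda>R. if R = Q then 1 else 0) = M Q Q"
proof -
  have e: "cnj (if P = Q then 1 else 0) * (if Q' = Q then 1 else 0) * M P Q' = (if Q' = Q then (if P = Q then M Q Q else 0) else 0)" for P Q'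
    by auto
  show ?thesis unfolding qf_def e using S Q by (simp add: sum.delta)
qed

lemma psd_zero_row:
  assumes S: "finite S" and herm: "\<And>P Q. P \<in> S \<Longrightarrow> Q \<in> S \<Longrightarrow> M Q P = cnj (M P Q)"
    and psd: "\<And>x. 0 \<le> qf S M x" and i: "i \<in> S" and Mii: "M i i = 0" and Q: "Q \<in> S"
  shows "M i Q = 0"
proof (cases "Q = i")
  case True thus ?thesis using Mii by simp
next
  case False
  define \<beta> where "\<beta> = M i Q"
  define e where "e = (\<lambda>R. if R = Q then 1 else (0::complex))"
  have sum_e: "(\<Sum>Q'\<in>S. M i Q' * e Q') = \<beta>" using S Q by (simp add: e_def \<beta>_def if_distrib sum.delta cong: if_cong)
  have q: "0 \<le> M Q Q - of_real (2 * s * (cmod \<beta>)\<^sup>2)" for s :: real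
  proof -
    have "0 \<le> qf S M (\<lambda>R. e R + (if R = i then - of_real s * \<beta> else 0))" by (rule psd)
    also have "\<dots> = qf S M e + cnj (- of_real s * \<beta>) * \<beta> + (- of_real s * \<beta>) * cnj \<beta> + cnj (- of_real s * \<beta>) * (- of_real s * \<beta>) * M i i"
      by (simp only: qf_shift[OF S i herm, where x = e and t = "- of_real s * \<beta>"] sum_e)
    also have "\<dots> = M Q Q - of_real (2 * s * (cmod \<beta>)\<^sup>2)"
    proof -
      have qe: "qf S M e = M Q Q" unfolding e_def by (rule qf_delta[OF S Q])
      have cz: "cnj \<beta> * \<beta> = of_real ((cmod \<beta>)\<^sup>2)" by (metis complex_norm_square mult.commute of_real_power)
      have a1: "cnj (- of_real s * \<beta>) * \<beta> = - of_real s * (cnj \<beta> * \<beta>)" by simp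
      have a2: "(- of_real s * \<beta>) * cnj \<beta> = - of_real s * (cnj \<beta> * \<beta>)" by (simp add: mult_ac)
      show ?thesis unfolding qe a1 a2 cz Mii by simp
    qed
    finally show ?thesis .
  qed
  show ?thesis
  proof (rule ccontr)
    assume "M i Q \<noteq> 0"
    hence b: "(cmod \<beta>)\<^sup>2 > 0" by (simp add: \<beta>_def)
    define s where "s = (Re (M Q Q) + 1) / (2 * (cmod \<beta>)\<^sup>2)"
    have "0 \<le> Re (M Q Q) - 2 * s * (cmod \<beta>)\<^sup>2" using q[of s] by (simp add: less_eq_complex_def)
    also have "2 * s * (cmod \<beta>)\<^sup>2 = Re (M Q Q) + 1" using b by (simp add: s_def)
    finally show False by simp
  qed
qed

lemma qf_insert_zero:
  assumes S: "finite S" "i \<notin> S" and z: "\<And>Q. Q \<in> insert i S \<Longrightarrow> M i Q = 0 \<and> M Q i = 0"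
  shows "qf (insert i S) M x = qf S M x"
proof -
  have "qf (insert i S) M x = (\<Sum>Q\<in>insert i S. cnj (x i) * x Q * M i Q) + (\<Sum>P\<in>S. \<Sum>Q\<in>insert i S. cnj (x P) * x Q * M P Q)"
    unfolding qf_def using S by (simp add: sum.insert)
  also have "(\<Sum>Q\<in>insert i S. cnj (x i) * x Q * M i Q) = 0" using z by (intro sum.neutral) auto
  also have "(\<Sum>P\<in>S. \<Sum>Q\<in>insert i S. cnj (x P) * x Q * M P Q) = qf S M x"
    unfolding qf_def
  proof (rule sum.cong[OF refl])
    fix P assume P: "P \<in> S"
    have "M P i = 0" using z[of P] P by simp
    thus "(\<Sum>Q\<in>insert i S. cnj (x P) * x Q * M P Q) = (\<Sum>Q\<in>S. cnj (x P) * x Q * M P Q)"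
      using S by (simp add: sum.insert)
  qed
  finally show ?thesis by simp
qed

lemma qf_diff_rank1:
  "qf S (\<lambda>P Q. M P Q - cnj (a P) * a Q / d) x = qf S M x - cnj (\<Sum>Q\<in>S. a Q * x Q) * (\<Sum>Q\<in>S. a Q * x Q) / d"
proof -
  have "cnj (\<Sum>Q\<in>S. a Q * x Q) * (\<Sum>Q\<in>S. a Q * x Q) / d = (\<Sum>P\<in>S. \<Sum>Q\<in>S. cnj (a P * x P) * (a Q * x Q) / d)"
    by (simp only: cnj_sum sum_product sum_divide_distrib)
  also have "\<dots> = qf S (\<lambda>P Q. cnj (a P) * a Q / d) x"
    unfolding qf_def by (intro sum.cong refl) (simp add: mult_ac)
  finally have "qf S (\<lambda>P Q. cnj (a P) * a Q / d) x = cnj (\<Sum>Q\<in>S. a Q * x Q) * (\<Sum>Q\<in>S. a Q * x Q) / d" by simp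
  moreover have "qf S (\<lambda>P Q. M P Q - cnj (a P) * a Q / d) x = qf S M x - qf S (\<lambda>P Q. cnj (a P) * a Q / d) x"
    unfolding qf_def by (simp add: right_diff_distrib sum_subtractf)
  ultimately show ?thesis by simp
qed

lemma sum_upd0:
  fixes v x :: "'a \<Rightarrow> complex"
  assumes "finite S" "i \<notin> S"
  shows "(\<Sum>Q\<in>insert i S. (if Q = i then 0 else v Q) * x Q) = (\<Sum>Q\<in>S. v Q * x Q)"
proof -
  have "(\<Sum>Q\<in>S. (if Q = i then 0 else v Q) * x Q) = (\<Sum>Q\<in>S. v Q * x Q)" using assms by (intro sum.cong) auto
  thus ?thesis using assms by (simp add: sum.insert)
qed

lemma cholesky:
  assumes "finite S"
  shows "(\<And>P Q. P \<in> S \<Longrightarrow> Q \<in> S \<Longrightarrow> M Q P = cnj (M P Q)) \<Longrightarrow> (\<And>x. 0 \<le> qf S M x) \<Longrightarrow>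
    \<exists>vs. \<forall>x. qf S M x = (\<Sum>v\<leftarrow>vs. of_real ((cmod (\<Sum>Q\<in>S. v Q * x Q))\<^sup>2))"
  using assms
proof (induction S arbitrary: M rule: finite_induct)
  case empty
  show ?case by (rule exI[of _ "[]"]) (simp add: qf_def)
next
  case (insert i S)
  note herm = insert.prems(1) and psd = insert.prems(2)
  let ?T = "insert i S"
  have fT: "finite ?T" using insert by simp
  show ?case
  proof (cases "M i i = 0")
    case True
    have row: "M i Q = 0" if "Q \<in> ?T" for Q by (rule psd_zero_row[OF fT herm psd _ True that]) auto
    have z: "M i Q = 0 \<and> M Q i = 0" if "Q \<in> ?T" for Q
      using row[OF that] herm[of i Q] that by auto
    have eq: "qf ?T M x = qf S M x" for x by (rule qf_insert_zero[where M = M, OF insert(1,2) z])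
    obtain vs where vs: "\<And>x. qf S M x = (\<Sum>v\<leftarrow>vs. of_real ((cmod (\<Sum>Q\<in>S. v Q * x Q))\<^sup>2))"
    proof -
      have h': "M Q P = cnj (M P Q)" if "P \<in> S" "Q \<in> S" for P Q using herm that by blast
      have p': "0 \<le> qf S M x" for x using psd[of x] eq[of x] by simp
      show ?thesis using insert.IH[OF h' p'] that by blast
    qed
    show ?thesis
      by (rule exI[of _ "map (\<lambda>v. v(i := 0)) vs"]) (simp add: eq vs sum_upd0[OF insert(1,2)] o_def)
  next
    case False
    define d where "d = M i i"
    have d0: "0 \<le> d" using psd[of "\<lambda>R. if R = i then 1 else 0"] qf_delta[OF fT, of i M] by (simp add: d_def)
    define r where "r = Re d"
    have dr: "d = of_real r" using d0 by (simp add: r_def less_eq_complex_def complex_eq_iff)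
    have r0: "0 < r" using d0 False by (auto simp: r_def d_def less_eq_complex_def complex_eq_iff)
    have cd: "cnj d = d" by (simp add: dr)
    define a where "a Q = M i Q" for Q
    define M' where "M' P Q = M P Q - cnj (a P) * a Q / d" for P Q
    have qM': "qf ?T M' x = qf ?T M x - cnj (\<Sum>Q\<in>?T. a Q * x Q) * (\<Sum>Q\<in>?T. a Q * x Q) / d" for x
      unfolding M'_def by (rule qf_diff_rank1)
    have hermM': "M' Q P = cnj (M' P Q)" if "P \<in> ?T" "Q \<in> ?T" for P Q
      using herm[OF that] cd by (simp add: M'_def mult_ac)
    have psdM': "0 \<le> qf ?T M' x" for x
    proof -
      define \<alpha> where "\<alpha> = (\<Sum>Q\<in>?T. a Q * x Q)"
      define t where "t = - \<alpha> / d"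
      have "0 \<le> qf ?T M (\<lambda>R. x R + (if R = i then t else 0))" by (rule psd)
      also have "\<dots> = qf ?T M x + cnj t * \<alpha> + t * cnj \<alpha> + cnj t * t * d"
        unfolding \<alpha>_def a_def d_def by (rule qf_shift[OF fT insertI1 herm])
      also have "\<dots> = qf ?T M x - cnj \<alpha> * \<alpha> / d"
        using False cd by (simp add: t_def d_def[symmetric] field_simps)
      also have "\<dots> = qf ?T M' x" by (simp add: qM' \<alpha>_def)
      finally show ?thesis .
    qed
    have z: "M' i Q = 0 \<and> M' Q i = 0" if "Q \<in> ?T" for Q
    proof -
      have "M' i Q = 0" using cd False by (simp add: M'_def a_def d_def[symmetric])
      moreover have "M Q i = cnj (M i Q)" using herm[OF insertI1 that] .
      hence "M' Q i = 0" using False by (simp add: M'_def a_def d_def[symmetric])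
      ultimately show ?thesis by simp
    qed
    have eq: "qf ?T M' x = qf S M' x" for x by (rule qf_insert_zero[where M = M', OF insert(1,2) z])
    obtain vs where vs: "\<And>x. qf S M' x = (\<Sum>v\<leftarrow>vs. of_real ((cmod (\<Sum>Q\<in>S. v Q * x Q))\<^sup>2))"
    proof -
      have h': "M' Q P = cnj (M' P Q)" if "P \<in> S" "Q \<in> S" for P Q using hermM' that by blast
      have p': "0 \<le> qf S M' x" for x using psdM'[of x] eq[of x] by simp
      show ?thesis using insert.IH[OF h' p'] that by blast
    qed
    define v0 where "v0 Q = a Q / of_real (sqrt r)" for Q
    have v0: "of_real ((cmod (\<Sum>Q\<in>?T. v0 Q * x Q))\<^sup>2) = cnj (\<Sum>Q\<in>?T. a Q * x Q) * (\<Sum>Q\<in>?T. a Q * x Q) / d" for x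
    proof -
      define A where "A = (\<Sum>Q\<in>?T. a Q * x Q)"
      have "(\<Sum>Q\<in>?T. v0 Q * x Q) = A / of_real (sqrt r)"
        by (simp add: v0_def A_def sum_divide_distrib)
      hence "(cmod (\<Sum>Q\<in>?T. v0 Q * x Q))\<^sup>2 = (cmod A)\<^sup>2 / r"
        using r0 by (simp add: norm_divide power_divide)
      hence "of_real ((cmod (\<Sum>Q\<in>?T. v0 Q * x Q))\<^sup>2) = (of_real ((cmod A)\<^sup>2) :: complex) / d"
        by (simp add: dr)
      also have "(of_real ((cmod A)\<^sup>2) :: complex) = cnj A * A"
        by (metis complex_norm_square mult.commute of_real_power)
      finally show ?thesis by (simp add: A_def)
    qed
    show ?thesis
    proof (rule exI[of _ "v0 # map (\<lambda>v. v(i := 0)) vs"], intro allI)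
      fix x
      have "qf ?T M x = qf ?T M' x + cnj (\<Sum>Q\<in>?T. a Q * x Q) * (\<Sum>Q\<in>?T. a Q * x Q) / d" by (simp add: qM')
      also have "\<dots> = (\<Sum>v\<leftarrow>v0 # map (\<lambda>v. v(i := 0)) vs. of_real ((cmod (\<Sum>Q\<in>?T. v Q * x Q))\<^sup>2))"
      proof -
        have s1: "(\<Sum>v\<leftarrow>map (\<lambda>v. v(i := 0)) vs. of_real ((cmod (\<Sum>Q\<in>?T. v Q * x Q))\<^sup>2) :: complex) = (\<Sum>v\<leftarrow>vs. of_real ((cmod (\<Sum>Q\<in>S. v Q * x Q))\<^sup>2))"
          by (simp add: o_def sum_upd0[OF insert(1,2)])
        show ?thesis by (simp only: list.map sum_list.Cons s1 v0 eq vs add.commute)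
      qed
      finally show "qf ?T M x = (\<Sum>v\<leftarrow>v0 # map (\<lambda>v. v(i := 0)) vs. of_real ((cmod (\<Sum>Q\<in>?T. v Q * x Q))\<^sup>2))" .
    qed
  qed
qed


lemma finner_smult_left:
  assumes "c \<noteq> 0"
  shows "finner h (\<lambda>P. c * u P) v = cnj c * finner h u v"
  using assms by (simp add: finner_def sum_distrib_left mult_ac)

lemma finner_self:
  "finner h u u = of_real (\<Sum>P\<in>{P. u P \<noteq> 0}. (cmod (u P))\<^sup>2 * wt h P)"
proof -
  have "cnj z * z = of_real ((cmod z)\<^sup>2)" for z by (metis complex_norm_square mult.commute of_real_power)
  thus ?thesis unfolding finner_def wt_def of_real_sum by (intro sum.cong refl) (simp add: mult_ac)
qed

lemma vec_state:
  assumes h: "0 < h" and u: "u \<in> Fock" and n: "finner h u u = 1"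
  shows "is_state h (\<lambda>f. finner h u (piop h f u))"
  unfolding is_state_def
proof (intro conjI ballI allI impI)
  fix f g :: "'a pol" assume f: "f \<in> Bset" and g: "g \<in> Bset"
  have "piop h (padd f g) u = (\<lambda>P. piop h f u P + piop h g u P)"
    using f g by (simp add: fun_eq_iff piop_padd[OF Bset_fs[OF f] Bset_fs[OF g]])
  thus "finner h u (piop h (padd f g) u) = finner h u (piop h f u) + finner h u (piop h g u)"
    by (simp add: finner_add_right)
next
  fix f :: "'a pol" and c assume f: "f \<in> Bset"
  have "piop h (psmult c f) u = (\<lambda>P. c * piop h f u P)"
    by (simp add: fun_eq_iff piop_psmult[OF Bset_fs[OF f]])
  thus "finner h u (piop h (psmult c f) u) = c * finner h u (piop h f u)"
    by (simp add: finner_smult_right)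
next
  have "piop h pone u = u" by (simp add: fun_eq_iff piop_pone)
  thus "finner h u (piop h pone u) = 1" using n by simp
next
  fix f :: "'a pol" assume f: "f \<in> Bset" and hf: "hermitian f"
  have "cnj (finner h u (piop h f u)) = finner h u (piop h f u)" by (rule herm_real[OF Bset_fs[OF f] hf u])
  thus "finner h u (piop h f u) \<in> \<real>" by (metis Reals_cnj_iff)
next
  fix f :: "'a pol" assume "f \<in> Bplus h"
  thus "0 \<le> finner h u (piop h f u)" using u by (simp add: Bplus_def)
qed

lemma vec_rel:
  assumes u: "\<And>P. u P \<noteq> 0 \<Longrightarrow> h * real (mabs P) = \<mu>"
  shows "finner h u (piop h (wick h (cJ \<mu>) (cJ \<mu>)) u) = 0"
proof -
  have z: "piop h (cJ \<mu>) u = (\<lambda>_. 0)"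
  proof
    fix P show "piop h (cJ \<mu>) u P = 0" using u[of P] by (cases "u P = 0") (auto simp: piop_cJ)
  qed
  have "piop h (wick h (cJ \<mu>) (cJ \<mu>)) u = piop h (cJ \<mu>) (piop h (cJ \<mu>) u)"
    by (simp add: fun_eq_iff piop_wick[OF fs_cJ fs_cJ])
  also have "\<dots> = piop h (cJ \<mu>) (\<lambda>_. 0)" by (simp only: z)
  also have "\<dots> = (\<lambda>_. 0)" by (simp add: fun_eq_iff piop_cJ)
  finally show ?thesis by (simp add: finner_def)
qed

lemma Rset_psd:
  assumes h: "0 < h" and f: "f \<in> Rset h \<mu>" and u: "u \<in> Fock"
    and lev: "\<And>P. u P \<noteq> 0 \<Longrightarrow> h * real (mabs P) = \<mu>"
  shows "0 \<le> finner h u (piop h f u)"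
proof (cases "\<forall>P. u P = 0")
  case True thus ?thesis by (simp add: finner_def)
next
  case False
  then obtain P0 where P0: "u P0 \<noteq> 0" by auto
  define nu where "nu = (\<Sum>P\<in>{P. u P \<noteq> 0}. (cmod (u P))\<^sup>2 * wt h P)"
  have fu: "finite {P. u P \<noteq> 0}" using u by (simp add: Fock_def)
  have nu0: "0 < nu" unfolding nu_def
  proof (rule sum_pos2[OF fu])
    show "P0 \<in> {P. u P \<noteq> 0}" using P0 by simp
    show "0 < (cmod (u P0))\<^sup>2 * wt h P0" using P0 wt_pos[OF h, of P0] by (intro mult_pos_pos) auto
    fix P show "0 \<le> (cmod (u P))\<^sup>2 * wt h P" using wt_pos[OF h, of P] by simp
  qed
  define c where "c = 1 / sqrt nu"
  have c0: "0 < c" using nu0 by (simp add: c_def)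
  define u' where "u' = (\<lambda>P. of_real c * u P)"
  have u'F: "u' \<in> Fock" using u c0 by (simp add: u'_def Fock_def)
  have "finner h u' u' = of_real c * of_real c * finner h u u"
    using c0 by (simp add: u'_def finner_smult_left finner_smult_right)
  also have "\<dots> = of_real (c * c * nu)" by (simp add: finner_self nu_def)
  also have "c * c * nu = 1" using nu0 by (simp add: c_def)
  finally have n1: "finner h u' u' = 1" by simp
  have lev': "\<And>P. u' P \<noteq> 0 \<Longrightarrow> h * real (mabs P) = \<mu>" using lev by (simp add: u'_def)
  have "0 \<le> finner h u' (piop h f u')"
    using f vec_state[OF h u'F n1] vec_rel[OF lev'] by (auto simp: Rset_def wick_cJ_eq)
  also have "finner h u' (piop h f u') = of_real (c * c) * finner h u (piop h f u)"
  proof -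
    have "piop h f u' = (\<lambda>P. of_real c * piop h f u P)" by (simp add: u'_def fun_eq_iff piop_usmult)
    thus ?thesis using c0 by (simp add: u'_def finner_smult_left finner_smult_right)
  qed
  finally have "0 \<le> of_real (c * c) * finner h u (piop h f u)" .
  moreover have "0 < c * c" using c0 by simp
  ultimately show ?thesis
    by (auto simp: less_eq_complex_def zero_le_mult_iff)
qed


definition dlf :: "'i::finite mi \<Rightarrow> 'i fock" where "dlf Q = (\<lambda>R. if R = Q then 1 else 0)"

lemma Fock_dlf: "dlf Q \<in> Fock" by (simp add: dlf_def Fock_def)

definition Mf :: "real \<Rightarrow> 'i::finite pol \<Rightarrow> 'i mi \<Rightarrow> 'i mi \<Rightarrow> complex" where
  "Mf h f P Q = piop h f (dlf Q) P * of_real (wt h P)"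

lemma piop_usum: "piop h f (\<lambda>R. \<Sum>Q\<in>F. c Q * w Q R) P = (\<Sum>Q\<in>F. c Q * piop h f (w Q) P)"
proof -
  have "piop h f (\<lambda>R. \<Sum>Q\<in>F. c Q * w Q R) P = (\<Sum>p\<in>{p. f p \<noteq> 0}. \<Sum>Q\<in>F. f p * (c Q * pm h (fst p) (snd p) (w Q) P))"
    unfolding piop_alt by (simp add: pm_sum sum_distrib_left)
  also have "\<dots> = (\<Sum>Q\<in>F. \<Sum>p\<in>{p. f p \<noteq> 0}. f p * (c Q * pm h (fst p) (snd p) (w Q) P))" by (rule sum.swap)
  also have "\<dots> = (\<Sum>Q\<in>F. c Q * piop h f (w Q) P)"
    unfolding piop_alt by (simp add: sum_distrib_left mult_ac)
  finally show ?thesis .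
qed

lemma finner_qf:
  assumes u: "u \<in> Fock" and S: "finite S" "{P. u P \<noteq> 0} \<subseteq> S"
  shows "finner h u (piop h f u) = qf S (Mf h f) u"
proof -
  have ue: "u = (\<lambda>R. \<Sum>Q\<in>S. u Q * dlf Q R)"
  proof
    fix R
    have "(\<Sum>Q\<in>S. u Q * dlf Q R) = (\<Sum>Q\<in>S. if Q = R then u R else 0)"
      by (intro sum.cong refl) (auto simp: dlf_def)
    also have "\<dots> = u R" using S by (auto simp: sum.delta')
    finally show "u R = (\<Sum>Q\<in>S. u Q * dlf Q R)" by simp
  qed
  have pu: "piop h f u P = (\<Sum>Q\<in>S. u Q * piop h f (dlf Q) P)" for P
    by (subst ue) (rule piop_usum)
  have "finner h u (piop h f u) = ip h S u (piop h f u)"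
    by (rule finner_ip[OF u S(1)]) (use S(2) in auto)
  also have "\<dots> = qf S (Mf h f) u"
    unfolding ip_def qf_def Mf_def pu by (simp add: sum_distrib_left sum_distrib_right mult_ac)
  finally show ?thesis .
qed

lemma finner_dlf: "finner h (dlf P) w = w P * of_real (wt h P)"
proof -
  have "{K. dlf P K \<noteq> 0} = {P}" by (auto simp: dlf_def)
  thus ?thesis by (simp add: finner_def dlf_def wt_def)
qed

lemma Mf_herm:
  assumes f: "fs f" "hermitian f"
  shows "Mf h f Q P = cnj (Mf h f P Q)"
proof -
  have "Mf h f P Q = finner h (dlf P) (piop h f (dlf Q))" by (simp add: Mf_def finner_dlf)
  also have "\<dots> = finner h (piop h f (dlf P)) (dlf Q)"
    using piop_adj[OF Fock_dlf Fock_dlf f(1), of h P Q] f(2) by (simp add: hermitian_def)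
  also have "\<dots> = cnj (finner h (dlf Q) (piop h f (dlf P)))"
    by (rule finner_cnj[OF Fock_dlf Fock_piop[OF Fock_dlf f(1)]])
  also have "finner h (dlf Q) (piop h f (dlf P)) = Mf h f Q P" by (simp add: Mf_def finner_dlf)
  finally show ?thesis by simp
qed

definition kz :: "nat \<Rightarrow> 'i::finite mi" where "kz m = (\<lambda>i. if i = (SOME j. True) then m else 0)"

lemma mabs_kz: "mabs (kz m) = m"
  by (simp add: mabs_def kz_def)

definition lvl :: "nat \<Rightarrow> 'i::finite mi set" where "lvl m = {L. mabs L = m}"

lemma finite_lvl: "finite (lvl m)"
proof -
  have "lvl m \<subseteq> {L. L \<le> (\<lambda>_. m)}" by (auto simp: lvl_def le_fun_def le_mabs)
  thus ?thesis using finite_box by (rule finite_subset)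
qed

definition rone :: "real \<Rightarrow> nat \<Rightarrow> ('i::finite mi \<Rightarrow> complex) \<Rightarrow> 'i pol" where
  "rone h m v = (\<lambda>(K, L). if K = kz m \<and> mabs L = m then v L / of_real (h ^ m * real (mfact L) * sqrt (wt h (kz m :: 'i mi))) else 0)"

lemma rone_sp:
  fixes h :: real and m :: nat and v :: "'i::finite mi \<Rightarrow> complex"
  shows "{p. rone h m v p \<noteq> 0} \<subseteq> {kz m} \<times> lvl m"
  by (auto simp: rone_def lvl_def split: if_splits)

lemma rone_Bset:
  fixes h :: real and m :: nat and v :: "'i::finite mi \<Rightarrow> complex"
  shows "rone h m v \<in> Bset"
proof -
  have "fs (rone h m v)" using finite_subset[OF rone_sp] finite_lvl by blast
  moreover have "bideg (rone h m v)" by (auto simp: bideg_def rone_def mabs_kz split: if_splits)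
  ultimately show ?thesis by (simp add: Bset_iff)
qed

lemma sq_form:
  assumes a: "fs a" and u: "u \<in> Fock"
  shows "finner h u (piop h (wick h (pstar a) a) u) = finner h (piop h a u) (piop h a u)"
proof -
  have "piop h (wick h (pstar a) a) u = piop h (pstar a) (piop h a u)"
    by (rule ext) (rule piop_wick[OF fs_pstar[OF a] a])
  thus ?thesis
    using piop_adj[OF u Fock_piop[OF u a] fs_pstar[OF a], of h] by (simp add: pstar_pstar)
qed

lemma piop_rone:
  fixes v :: "'i::finite mi \<Rightarrow> complex"
  assumes h: "0 < h" and lv: "\<And>P. u P \<noteq> 0 \<Longrightarrow> mabs P = m"
  shows "piop h (rone h m v) u P = (if P = kz m then (\<Sum>L\<in>lvl m. v L * u L) / of_real (sqrt (wt h (kz m :: 'i mi))) else 0)"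
proof -
  let ?k = "kz m :: 'i mi"
  have fin: "finite ({?k} \<times> (lvl m :: 'i mi set))" by (intro finite_cartesian_product) (simp_all add: finite_lvl)
  have "piop h (rone h m v) u P = (\<Sum>p\<in>{?k} \<times> lvl m. rone h m v p * pm h (fst p) (snd p) u P)"
    by (rule piop_superset[OF fin rone_sp])
  also have "\<dots> = (\<Sum>L\<in>lvl m. rone h m v (?k, L) * pm h ?k L u P)"
  proof -
    have "{?k} \<times> (lvl m :: 'i mi set) = Pair ?k ` lvl m" by auto
    thus ?thesis by (simp add: sum.reindex inj_on_def)
  qed
  also have "\<dots> = (\<Sum>L\<in>lvl m. if P = ?k then v L * u L / of_real (sqrt (wt h ?k)) else 0)"
  proof (rule sum.cong[OF refl])
    fix L :: "'i mi" assume L: "L \<in> lvl m"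
    hence mL: "mabs L = m" by (simp add: lvl_def)
    show "rone h m v (?k, L) * pm h ?k L u P = (if P = ?k then v L * u L / of_real (sqrt (wt h ?k)) else 0)"
    proof (cases "P = ?k")
      case True
      have z: "P - ?k = 0" using True by (simp add: fun_eq_iff)
      have pmv: "pm h ?k L u P = of_real (h ^ m * real (mfact L)) * u L"
        using True by (simp add: pm_alt z mL mfact_def)
      have nz: "h ^ m * real (mfact L) \<noteq> 0" using h by (simp add: mfact_def)
      show ?thesis using True nz h unfolding pmv by (simp add: rone_def mL field_simps)
    next
      case False
      have "pm h ?k L u P = 0"
      proof (cases "?k \<le> P")
        case True
        have "P - ?k \<noteq> 0"
        proof
          assume "P - ?k = 0"
          hence "P = ?k" using True by (auto simp: fun_eq_iff le_fun_def) (metis diff_is_0_eq le_antisym)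
          thus False using False by simp
        qed
        hence "mabs (P - ?k) \<noteq> 0" by (auto simp: mabs_def fun_eq_iff)
        hence "mabs (P - ?k + L) \<noteq> m" using mL by (simp add: mabs_add)
        hence "u (P - ?k + L) = 0" using lv by blast
        thus ?thesis using True by (simp add: pm_alt)
      qed (simp add: pm_alt)
      thus ?thesis using False by simp
    qed
  qed
  also have "\<dots> = (if P = ?k then (\<Sum>L\<in>lvl m. v L * u L) / of_real (sqrt (wt h ?k)) else 0)"
    by (simp add: sum_divide_distrib)
  finally show ?thesis .
qed

lemma rone_quad:
  fixes v :: "'i::finite mi \<Rightarrow> complex"
  assumes h: "0 < h" and u: "u \<in> Fock" and lv: "\<And>P. u P \<noteq> 0 \<Longrightarrow> mabs P = m"
  shows "finner h u (piop h (wick h (pstar (rone h m v)) (rone h m v)) u) = of_real ((cmod (\<Sum>L\<in>lvl m. v L * u L))\<^sup>2)"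
proof -
  let ?k = "kz m :: 'i mi"
  define z where "z = (\<Sum>L\<in>lvl m. v L * u L) / of_real (sqrt (wt h ?k))"
  have w: "piop h (rone h m v) u = (\<lambda>P. if P = ?k then z else 0)"
    by (rule ext) (simp add: piop_rone[OF h lv] z_def)
  have wk: "0 < wt h ?k" by (rule wt_pos[OF h])
  have "finner h u (piop h (wick h (pstar (rone h m v)) (rone h m v)) u) = finner h (piop h (rone h m v) u) (piop h (rone h m v) u)"
    by (rule sq_form[OF Bset_fs[OF rone_Bset] u])
  also have "\<dots> = of_real (\<Sum>P\<in>{P. (if P = ?k then z else 0) \<noteq> 0}. (cmod (if P = ?k then z else 0))\<^sup>2 * wt h P)"
    unfolding w by (rule finner_self)
  also have "(\<Sum>P\<in>{P. (if P = ?k then z else 0) \<noteq> 0}. (cmod (if P = ?k then z else 0))\<^sup>2 * wt h P) = (cmod z)\<^sup>2 * wt h ?k"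
    by (cases "z = 0") auto
  also have "(cmod z)\<^sup>2 * wt h ?k = (cmod (\<Sum>L\<in>lvl m. v L * u L))\<^sup>2"
    using wk by (simp add: z_def norm_divide power_divide)
  finally show ?thesis .
qed


lemma decomp:
  fixes f :: "'i::finite pol"
  assumes h: "0 < h" and mu: "0 \<le> \<mu>" and f: "f \<in> Rset h \<mu>"
  shows "\<exists>p\<in>Bpp h. \<forall>u\<in>Fock. (\<forall>P. u P \<noteq> 0 \<longrightarrow> h * real (mabs P) = \<mu>) \<longrightarrow>
           finner h u (piop h p u) = finner h u (piop h f u)"
proof (cases "\<exists>m::nat. \<mu> = h * real m")
  case False
  have "(\<lambda>_. 0) \<in> Bpp h" unfolding Bpp_def by (rule CollectI, rule exI[of _ "[]"]) simp
  moreover have "finner h u (piop h (\<lambda>_. 0) u) = finner h u (piop h f u)"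
    if "\<forall>P. u P \<noteq> 0 \<longrightarrow> h * real (mabs P) = \<mu>" for u :: "'i fock"
  proof -
    have "\<forall>P. u P = 0" using that False by metis
    thus ?thesis by (simp add: finner_def)
  qed
  ultimately show ?thesis by blast
next
  case True
  then obtain m :: nat where m: "\<mu> = h * real m" by blast
  let ?S = "lvl m :: 'i mi set"
  have fS: "finite ?S" by (rule finite_lvl)
  have fB: "f \<in> Bset" and fh: "hermitian f" using f by (auto simp: Rset_def)
  let ?M = "Mf h f"
  have herm: "?M Q P = cnj (?M P Q)" if "P \<in> ?S" "Q \<in> ?S" for P Q by (rule Mf_herm[OF Bset_fs[OF fB] fh])
  have levm: "h * real (mabs P) = \<mu> \<longleftrightarrow> mabs P = m" for P :: "'i mi" using h by (simp add: m)
  have psd: "0 \<le> qf ?S ?M x" for x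
  proof -
    define u where "u = (\<lambda>R. if R \<in> ?S then x R else 0)"
    have uF: "u \<in> Fock" using fS unfolding Fock_def u_def by (auto intro: finite_subset)
    have uS: "{P. u P \<noteq> 0} \<subseteq> ?S" by (auto simp: u_def split: if_splits)
    have "qf ?S ?M x = qf ?S ?M u" unfolding qf_def u_def by (intro sum.cong refl) auto
    also have "\<dots> = finner h u (piop h f u)" by (rule finner_qf[OF uF fS uS, symmetric])
    also have "0 \<le> \<dots>"
      by (rule Rset_psd[OF h f uF]) (use uS in \<open>auto simp: lvl_def levm\<close>)
    finally show ?thesis .
  qed
  obtain vs where vs: "\<And>x. qf ?S ?M x = (\<Sum>v\<leftarrow>vs. of_real ((cmod (\<Sum>Q\<in>?S. v Q * x Q))\<^sup>2))"
    using cholesky[OF fS, of ?M] herm psd by blast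
  define as where "as = map (rone h m) vs"
  have asB: "set as \<subseteq> Bset" by (auto simp: as_def rone_Bset)
  define p where "p = foldr (\<lambda>a s. padd (wick h (pstar a) a) s) as (\<lambda>_. 0)"
  have pB: "p \<in> Bpp h" using asB by (auto simp: Bpp_def p_def)
  have bl: "set bs \<subseteq> Bset \<Longrightarrow> foldr (\<lambda>a s. padd (wick h (pstar a) a) s) bs (\<lambda>_. 0) \<in> Bset \<and>
      finner h u (piop h (foldr (\<lambda>a s. padd (wick h (pstar a) a) s) bs (\<lambda>_. 0)) u) = (\<Sum>a\<leftarrow>bs. finner h u (piop h (wick h (pstar a) a) u))" for bs u
  proof (induction bs)
    case Nil thus ?case by (simp add: Bset_zero piop_def finner_def)
  next
    case (Cons a bs)
    let ?r = "foldr (\<lambda>a s. padd (wick h (pstar a) a) s) bs (\<lambda>_. 0)"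
    have aB: "a \<in> Bset" and IH: "?r \<in> Bset" "finner h u (piop h ?r u) = (\<Sum>a\<leftarrow>bs. finner h u (piop h (wick h (pstar a) a) u))"
      using Cons by auto
    have wB: "wick h (pstar a) a \<in> Bset" by (rule Bset_wick[OF Bset_pstar[OF aB] aB])
    have "piop h (padd (wick h (pstar a) a) ?r) u = (\<lambda>P. piop h (wick h (pstar a) a) u P + piop h ?r u P)"
      by (simp add: fun_eq_iff piop_padd[OF Bset_fs[OF wB] Bset_fs[OF IH(1)]])
    thus ?case using IH wB by (simp add: finner_add_right Bset_padd)
  qed
  have "finner h u (piop h p u) = finner h u (piop h f u)"
    if uF: "u \<in> Fock" and lv: "\<forall>P. u P \<noteq> 0 \<longrightarrow> h * real (mabs P) = \<mu>" for u
  proof -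
    have lv': "\<And>P. u P \<noteq> 0 \<Longrightarrow> mabs P = m" using lv levm by blast
    have uS: "{P. u P \<noteq> 0} \<subseteq> ?S" using lv' by (auto simp: lvl_def)
    have "finner h u (piop h p u) = (\<Sum>a\<leftarrow>as. finner h u (piop h (wick h (pstar a) a) u))"
      using bl[OF asB, of u] by (simp add: p_def)
    also have "\<dots> = (\<Sum>v\<leftarrow>vs. of_real ((cmod (\<Sum>Q\<in>?S. v Q * u Q))\<^sup>2))"
      unfolding as_def by (simp add: o_def rone_quad[OF h uF lv'])
    also have "\<dots> = qf ?S ?M u" by (rule vs[symmetric])
    also have "\<dots> = finner h u (piop h f u)" by (rule finner_qf[OF uF fS uS, symmetric])
    finally show ?thesis .
  qed
  thus ?thesis using pB by blast
qed

theorem proposition4p8: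
  fixes h \<mu> :: real
  assumes "0 < h" and "0 \<le> \<mu>"
  shows "(Rset h \<mu> :: 'i::finite pol set) = setsum (Bpp h) (csupp (Rset h \<mu>))"
proof
  show "setsum (Bpp h) (csupp (Rset h \<mu>)) \<subseteq> (Rset h \<mu> :: 'i pol set)" by (rule supset_dir[OF assms(1)])
next
  show "(Rset h \<mu> :: 'i pol set) \<subseteq> setsum (Bpp h) (csupp (Rset h \<mu>))"
  proof
    fix f :: "'i pol" assume f: "f \<in> Rset h \<mu>"
    obtain p where p: "p \<in> Bpp h" and pe: "\<And>u. u \<in> Fock \<Longrightarrow> (\<forall>P. u P \<noteq> 0 \<longrightarrow> h * real (mabs P) = \<mu>) \<Longrightarrow>
           finner h u (piop h p u) = finner h u (piop h f u)"
      using decomp[OF assms f] by blast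
    have pB: "p \<in> Bplus h" by (rule Bpp_Bplus[OF assms(1) p])
    have pBs: "p \<in> Bset" and ph: "hermitian p" using pB by (auto simp: Bplus_def)
    have fBs: "f \<in> Bset" and fh: "hermitian f" using f by (auto simp: Rset_def)
    define s where "s = padd f (pneg p)"
    have pn: "pneg p = psmult (-1) p" by (simp add: pneg_def psmult_def)
    have sB: "s \<in> Bset" unfolding s_def by (rule Bset_padd[OF fBs Bset_pneg[OF pBs]])
    have sh: "hermitian s" using fh ph unfolding s_def pn hermitian_def by (simp add: pstar_padd pstar_psmult)
    have Z: "finner h u (piop h s u) = 0" if u: "u \<in> Fock" and uP: "\<And>P. u P \<noteq> 0 \<Longrightarrow> h * real (mabs P) = \<mu>" for u
    proof -
      have "piop h s u = (\<lambda>P. piop h f u P + (-1) * piop h p u P)"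
        unfolding s_def pn using Bset_fs[OF fBs] Bset_fs[OF pBs]
        by (simp add: fun_eq_iff piop_padd[OF Bset_fs[OF fBs] fs_psmult[OF Bset_fs[OF pBs]]] piop_psmult[OF Bset_fs[OF pBs]])
      hence "finner h u (piop h s u) = finner h u (piop h f u) + (-1) * finner h u (piop h p u)"
        by (simp only: finner_add_right finner_smult_right)
      thus ?thesis using pe[OF u] uP by simp
    qed
    have sC: "s \<in> csupp (Rset h \<mu>)" by (rule supp_in[OF assms sB sh Z])
    have "f = padd p s" by (simp add: s_def padd_def pneg_def fun_eq_iff)
    thus "f \<in> setsum (Bpp h) (csupp (Rset h \<mu>))" using p sC by (auto simp: setsum_def)
  qed
qed


end
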